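(* Let $f_0,f_1:X\to\mathbb{R}$ be Morse functions, $\{m^0_{x,y}\}$, $\{m^1_{x',y'}\}$ twisting cocycles for $f_0$, $f_1$, and let $\{\tau_{x,y'}\}$, $\{\tau'_{x,y'}\}$ ($\tau_{x,y'},\tau'_{x,y'}\in C_{|x|-|y'|}(\Omega X)$, $x\in\mathrm{Crit}(f_0)$, $y'\in\mathrm{Crit}(f_1)$) both satisfy $\partial\tau_{x,y'}=\sum_z m^0_{x,z}\tau_{z,y'}-\sum_{w'}(-1)^{|x|-|w'|}\tau_{x,w'}m^1_{w',y'}$; let $\Psi,\Psi'$ be the associated morphisms $C_*(X,m^0,\mathcal{F})\to C_*(X,m^1,\mathcal{F})$, $\Psi=\sum_{n\ge1}\sum_{u=1}^n(-1)^{u-1}(\nu_{n+1}\otimes1)\tilde{\mathbf m}_{(1)}^{n-u}\tilde{\boldsymbol\tau}\tilde{\mathbf m}_{(0)}^{u-1}$ (and likewise $\Psi'$ with $\tau'$), for an $\mathcal{A}_\infty$-module $\mathcal{F}$ over $C_*(\Omega X)$. Suppose there is a family $\{h_{x,y'}\in C_{|x|-|y'|+1}(\Omega X)\}$ with $$\partial h_{x,y'}=\tau_{x,y'}-\tau'_{x,y'}+\sum_{z\in\mathrm{Crit}(f_0)}(-1)^{|x|-|z|}m^0_{x,z}h_{z,y'}+\sum_{w'\in\mathrm{Crit}(f_1)}(-1)^{|x|-|w'|}h_{x,w'}m^1_{w',y'}.$$ Then $H=\sum_{n\ge1}\sum_{u=1}^n(\nu_{n+1}\otimes1)\tilde{\mathbf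 m}_{(1)}^{n-u}\tilde{\boldsymbol h}\tilde{\mathbf m}_{(0)}^{u-1}:C_*(X,m^0,\mathcal{F})\to C_{*+1}(X,m^1,\mathcal{F})$ is a chain homotopy between $\Psi$ and $\Psi'$.
   Context: $C_*(\Omega X)$: cubical chains on Moore based loops, an $\mathcal{A}_\infty$-algebra with $\mu_1$ the differential, $\mu_2$ the Pontryagin product, $\mu_i=0$ for $i\ge3$; Koszul sign rule throughout. Twisting cocycles satisfy $\partial m_{x,y}=\sum_z(-1)^{|x|-|z|}m_{x,z}m_{z,y}$, $m_{x,y}\in C_{|x|-|y|-1}(\Omega X)$. $(\mathcal{F},\nu_n)$ is an $\mathcal{A}_\infty$-module: $\nu_n:\mathcal{F}\otimes C_*(\Omega X)^{\otimes n-1}\to\mathcal{F}$ of degree $n-2$ with $\sum_{s+t=N,s\ge1}(-1)^{st}\nu_{t+1}(\nu_s\otimes1^{\otimes t})+\sum_{r+s+t=N,r,s\ge1}(-1)^{r+st}\nu_{r+t+1}(1^{\otimes r}\otimes\mu_s\otimes1^{\otimes t})=0$. For a family $c=\{c_{x,y}\}$ indexed by critical points, $\mathbf c(x)=\sum_y c_{x,y}\otimes y$ and $\tilde{\mathbf c}(\alpha\otimes\gamma_1\otimes\cdots\otimes\gamma_k\otimes x)=(1^{\otimes k+1}\otimes\mathbf c)(\alpha\otimes\gamma_1\otimes\cdots\otimes\gamma_k\otimes x)$; this defines $\tilde{\mathbf m}_{(0)},\tilde{\mathbf m}_{(1)}$ (from $m^0,m^1$), $\tilde{\boldsymbol\tau}$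 and $\tilde{\boldsymbol h}$ (degree $1$). $C_*(X,m^i,\mathcal{F})=\mathcal{F}\otimes\mathbb{Z}\mathrm{Crit}(f_i)$ with differential $\sum_{n\ge0}(\nu_{n+1}\otimes1)\tilde{\mathbf m}_{(i)}^n$. *)

theory Defs
  imports Main
begin

definition sgnz :: "int \<Rightarrow> 'g::ab_group_add \<Rightarrow> 'g" where
  "sgnz k v = (if even k then v else - v)"

definition graded_group :: "(int \<Rightarrow> 'g::ab_group_add set) \<Rightarrow> bool" where
  "graded_group g \<longleftrightarrow>
     (\<forall>q. 0 \<in> g q \<and> (\<forall>a\<in>g q. \<forall>b\<in>g q. a + b \<in> g q) \<and> (\<forall>a\<in>g q. - a \<in> g q)) \<and>
     (\<forall>p q. p \<noteq> q \<longrightarrow> g p \<inter> g q \<subseteq> {0})"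

definition homog_list :: "(int \<Rightarrow> 'a set) \<Rightarrow> 'a list \<Rightarrow> int list \<Rightarrow> bool" where
  "homog_list g xs qs \<longleftrightarrow> length xs = length qs \<and> (\<forall>i<length xs. xs ! i \<in> g (qs ! i))"

section \<open>The A-infinity structure of C_*(Omega X): mu_1 = d, mu_2 = product, mu_i = 0 (i >= 3)\<close>

definition mu :: "('a \<Rightarrow> 'a) \<Rightarrow> ('a \<Rightarrow> 'a \<Rightarrow> 'a) \<Rightarrow> nat \<Rightarrow> 'a list \<Rightarrow> 'a::zero" where
  "mu dA mul s xs = (if s = 1 then dA (xs ! 0) else if s = 2 then mul (xs ! 0) (xs ! 1) else 0)"

definition ainf_alg :: "(int \<Rightarrow> 'a::ab_group_add set) \<Rightarrow> ('a \<Rightarrow> 'a) \<Rightarrow> ('a \<Rightarrow> 'a \<Rightarrow> 'a) \<Rightarrow> bool" where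
  "ainf_alg gA dA mul \<longleftrightarrow>
     graded_group gA \<and>
     (\<forall>a b. dA (a + b) = dA a + dA b) \<and>
     (\<forall>a b c. mul (a + b) c = mul a c + mul b c) \<and>
     (\<forall>a b c. mul a (b + c) = mul a b + mul a c) \<and>
     (\<forall>q. \<forall>a\<in>gA q. dA a \<in> gA (q - 1)) \<and>
     (\<forall>p q. \<forall>a\<in>gA p. \<forall>b\<in>gA q. mul a b \<in> gA (p + q)) \<and>
     (\<forall>N\<ge>1. \<forall>xs qs. homog_list gA xs qs \<and> length xs = N \<longrightarrow>
        (\<Sum>r<N. \<Sum>s\<in>{1..N - r}.
           sgnz (int r + int s * int (N - r - s) + (int s - 2) * sum_list (take r qs))
             (mu dA mul (r + 1 + (N - r - s))
                (take r xs @ [mu dA mul s (take s (drop r xs))] @ drop (r + s) xs))) = 0)"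

text \<open>An A-infinity module (F, nu_n) over (A, mu): nu n alpha [g_1,...,g_(n-1)] stands for
  nu_n(alpha (x) g_1 (x) ... (x) g_(n-1)), of degree n - 2, multilinear.\<close>
definition ainf_module ::
  "(int \<Rightarrow> 'a::ab_group_add set) \<Rightarrow> ('a \<Rightarrow> 'a) \<Rightarrow> ('a \<Rightarrow> 'a \<Rightarrow> 'a) \<Rightarrow>
   (int \<Rightarrow> 'f::ab_group_add set) \<Rightarrow> (nat \<Rightarrow> 'f \<Rightarrow> 'a list \<Rightarrow> 'f) \<Rightarrow> bool" where
  "ainf_module gA dA mul gF nu \<longleftrightarrow>
     graded_group gF \<and>
     (\<forall>n a b gs. nu n (a + b) gs = nu n a gs + nu n b gs) \<and>
     (\<forall>n a gs i x y. i < length gs \<longrightarrow>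
        nu n a (gs[i := x + y]) = nu n a (gs[i := x]) + nu n a (gs[i := y])) \<and>
     (\<forall>n\<ge>1. \<forall>a p gs qs. a \<in> gF p \<and> homog_list gA gs qs \<and> length gs = n - 1 \<longrightarrow>
        nu n a gs \<in> gF (p + sum_list qs + int n - 2)) \<and>
     (\<forall>N\<ge>1. \<forall>a p gs qs. a \<in> gF p \<and> homog_list gA gs qs \<and> length gs = N - 1 \<longrightarrow>
        (\<Sum>s\<in>{1..N}. sgnz (int s * int (N - s))
            (nu (N - s + 1) (nu s a (take (s - 1) gs)) (drop (s - 1) gs)))
      + (\<Sum>r\<in>{1..N}. \<Sum>s\<in>{1..N - r}.
           sgnz (int r + int s * int (N - r - s) + (int s - 2) * (p + sum_list (take (r - 1) qs)))
             (nu (r + (N - r - s) + 1) a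
                (take (r - 1) gs @ [mu dA mul s (take s (drop (r - 1) gs))] @ drop (r - 1 + s) gs)))
        = 0)"


definition twisting_cocycle ::
  "(int \<Rightarrow> 'a::ab_group_add set) \<Rightarrow> ('a \<Rightarrow> 'a) \<Rightarrow> ('a \<Rightarrow> 'a \<Rightarrow> 'a) \<Rightarrow>
   'c set \<Rightarrow> ('c \<Rightarrow> nat) \<Rightarrow> ('c \<Rightarrow> 'c \<Rightarrow> 'a) \<Rightarrow> bool" where
  "twisting_cocycle gA dA mul C ind m \<longleftrightarrow>
     (\<forall>x\<in>C. \<forall>y\<in>C. m x y \<in> gA (int (ind x) - int (ind y) - 1)) \<and>
     (\<forall>x\<in>C. \<forall>y\<in>C. dA (m x y) =
        (\<Sum>z\<in>C. sgnz (int (ind x) - int (ind z)) (mul (m x z) (m z y))))"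

definition tau_family ::
  "(int \<Rightarrow> 'a::ab_group_add set) \<Rightarrow> ('a \<Rightarrow> 'a) \<Rightarrow> ('a \<Rightarrow> 'a \<Rightarrow> 'a) \<Rightarrow>
   'c set \<Rightarrow> ('c \<Rightarrow> nat) \<Rightarrow> ('c \<Rightarrow> 'c \<Rightarrow> 'a) \<Rightarrow>
   'd set \<Rightarrow> ('d \<Rightarrow> nat) \<Rightarrow> ('d \<Rightarrow> 'd \<Rightarrow> 'a) \<Rightarrow> ('c \<Rightarrow> 'd \<Rightarrow> 'a) \<Rightarrow> bool" where
  "tau_family gA dA mul C0 ind0 m0 C1 ind1 m1 tau \<longleftrightarrow>
     (\<forall>x\<in>C0. \<forall>y\<in>C1. tau x y \<in> gA (int (ind0 x) - int (ind1 y))) \<and>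
     (\<forall>x\<in>C0. \<forall>y\<in>C1. dA (tau x y) =
        (\<Sum>z\<in>C0. mul (m0 x z) (tau z y))
        - (\<Sum>w\<in>C1. sgnz (int (ind0 x) - int (ind1 w)) (mul (tau x w) (m1 w y))))"

definition homotopy_family ::
  "(int \<Rightarrow> 'a::ab_group_add set) \<Rightarrow> ('a \<Rightarrow> 'a) \<Rightarrow> ('a \<Rightarrow> 'a \<Rightarrow> 'a) \<Rightarrow>
   'c set \<Rightarrow> ('c \<Rightarrow> nat) \<Rightarrow> ('c \<Rightarrow> 'c \<Rightarrow> 'a) \<Rightarrow>
   'd set \<Rightarrow> ('d \<Rightarrow> nat) \<Rightarrow> ('d \<Rightarrow> 'd \<Rightarrow> 'a) \<Rightarrow>
   ('c \<Rightarrow> 'd \<Rightarrow> 'a) \<Rightarrow> ('c \<Rightarrow> 'd \<Rightarrow> 'a) \<Rightarrow> ('c \<Rightarrow> 'd \<Rightarrow> 'a) \<Rightarrow> bool" where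
  "homotopy_family gA dA mul C0 ind0 m0 C1 ind1 m1 tau tau' h \<longleftrightarrow>
     (\<forall>x\<in>C0. \<forall>y\<in>C1. h x y \<in> gA (int (ind0 x) - int (ind1 y) + 1)) \<and>
     (\<forall>x\<in>C0. \<forall>y\<in>C1. dA (h x y) =
        tau x y - tau' x y
        + (\<Sum>z\<in>C0. sgnz (int (ind0 x) - int (ind0 z)) (mul (m0 x z) (h z y)))
        + (\<Sum>w\<in>C1. sgnz (int (ind0 x) - int (ind1 w)) (mul (h x w) (m1 w y))))"

text \<open>A pure tensor alpha (x) g_1 (x) ... (x) g_k (x) x, each factor recorded with its degree;
  a formal sum is a list of signed pure tensors (True = +1, False = -1).\<close>
type_synonym ('f, 'a, 'c) ptensor = "('f \<times> int) \<times> ('a \<times> int) list \<times> 'c"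
type_synonym ('f, 'a, 'c) ftensor = "(bool \<times> ('f, 'a, 'c) ptensor) list"

text \<open>c-tilde = 1^(k+1) (x) c, where c(x) = sum_y c_(x,y) (x) y has degree e, so c_(x,y) has
  degree |x| - |y| + e; Koszul sign (-1)^(e (|alpha| + sum |g_i|)).\<close>
definition ctilde :: "int \<Rightarrow> ('c \<Rightarrow> nat) \<Rightarrow> ('d \<Rightarrow> nat) \<Rightarrow> 'd::linorder set \<Rightarrow> ('c \<Rightarrow> 'd \<Rightarrow> 'a) \<Rightarrow>
    ('f, 'a, 'c) ftensor \<Rightarrow> ('f, 'a, 'd) ftensor" where
  "ctilde e ic jd D c ws = concat (map (\<lambda>(s, ap, gs, x).
      map (\<lambda>y. (s = even (e * (snd ap + sum_list (map snd gs))),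
                (ap, gs @ [(c x y, int (ic x) - int (jd y) + e)], y)))
          (sorted_list_of_set D)) ws)"

text \<open>(nu_(n+1) (x) 1) applied to a formal sum, read off at the generator y.\<close>
definition nu_eval :: "(nat \<Rightarrow> 'f::ab_group_add \<Rightarrow> 'a list \<Rightarrow> 'f) \<Rightarrow> ('f, 'a, 'd) ftensor \<Rightarrow> 'd \<Rightarrow> 'f" where
  "nu_eval nu ws y = sum_list (map (\<lambda>(s, ap, gs, y').
      if y' = y then (if s then nu (Suc (length gs)) (fst ap) (map fst gs)
                      else - nu (Suc (length gs)) (fst ap) (map fst gs)) else 0) ws)"

definition gen :: "'f \<Rightarrow> int \<Rightarrow> 'c \<Rightarrow> ('f, 'a, 'c) ftensor" where
  "gen a p x = [(True, ((a, p), [], x))]"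

definition fsum :: "(nat \<Rightarrow> 'g::comm_monoid_add) \<Rightarrow> 'g" where
  "fsum a = sum a {n. a n \<noteq> 0}"

text \<open>Elements of C_N(X,m,F): functions phi : Crit -> F with phi x in F_(N - |x|)
  (phi stands for sum_x phi(x) (x) x).\<close>
definition chain_el :: "(int \<Rightarrow> 'f set) \<Rightarrow> 'c set \<Rightarrow> ('c \<Rightarrow> nat) \<Rightarrow> int \<Rightarrow> ('c \<Rightarrow> 'f) \<Rightarrow> bool" where
  "chain_el gF C ind N phi \<longleftrightarrow> (\<forall>x\<in>C. phi x \<in> gF (N - int (ind x)))"

text \<open>Linear extension of a map given on generators alpha (x) x (alpha of degree p).\<close>
definition lin_ext :: "'c set \<Rightarrow> ('c \<Rightarrow> nat) \<Rightarrow> (int \<Rightarrow> 'f \<Rightarrow> 'c \<Rightarrow> 'd \<Rightarrow> 'f::ab_group_add) \<Rightarrow>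
    int \<Rightarrow> ('c \<Rightarrow> 'f) \<Rightarrow> ('d \<Rightarrow> 'f)" where
  "lin_ext C ind g N phi = (\<lambda>y. \<Sum>x\<in>C. g (N - int (ind x)) (phi x) x y)"

definition twisted_diff :: "(nat \<Rightarrow> 'f::ab_group_add \<Rightarrow> 'a list \<Rightarrow> 'f) \<Rightarrow> 'c::linorder set \<Rightarrow> ('c \<Rightarrow> nat) \<Rightarrow>
    ('c \<Rightarrow> 'c \<Rightarrow> 'a) \<Rightarrow> int \<Rightarrow> ('c \<Rightarrow> 'f) \<Rightarrow> ('c \<Rightarrow> 'f)" where
  "twisted_diff nu C ind m = lin_ext C ind (\<lambda>p a x y.
      fsum (\<lambda>n. nu_eval nu ((ctilde (-1) ind ind C m ^^ n) (gen a p x)) y))"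

definition Psi_map :: "(nat \<Rightarrow> 'f::ab_group_add \<Rightarrow> 'a list \<Rightarrow> 'f) \<Rightarrow>
    'c::linorder set \<Rightarrow> ('c \<Rightarrow> nat) \<Rightarrow> ('c \<Rightarrow> 'c \<Rightarrow> 'a) \<Rightarrow>
    'd::linorder set \<Rightarrow> ('d \<Rightarrow> nat) \<Rightarrow> ('d \<Rightarrow> 'd \<Rightarrow> 'a) \<Rightarrow> ('c \<Rightarrow> 'd \<Rightarrow> 'a) \<Rightarrow>
    int \<Rightarrow> ('c \<Rightarrow> 'f) \<Rightarrow> ('d \<Rightarrow> 'f)" where
  "Psi_map nu C0 ind0 m0 C1 ind1 m1 tau = lin_ext C0 ind0 (\<lambda>p a x y.
      fsum (\<lambda>n. \<Sum>u\<in>{1..n}. sgnz (int u - 1)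
        (nu_eval nu ((ctilde (-1) ind1 ind1 C1 m1 ^^ (n - u))
           (ctilde 0 ind0 ind1 C1 tau ((ctilde (-1) ind0 ind0 C0 m0 ^^ (u - 1)) (gen a p x)))) y)))"

definition H_map :: "(nat \<Rightarrow> 'f::ab_group_add \<Rightarrow> 'a list \<Rightarrow> 'f) \<Rightarrow>
    'c::linorder set \<Rightarrow> ('c \<Rightarrow> nat) \<Rightarrow> ('c \<Rightarrow> 'c \<Rightarrow> 'a) \<Rightarrow>
    'd::linorder set \<Rightarrow> ('d \<Rightarrow> nat) \<Rightarrow> ('d \<Rightarrow> 'd \<Rightarrow> 'a) \<Rightarrow> ('c \<Rightarrow> 'd \<Rightarrow> 'a) \<Rightarrow>
    int \<Rightarrow> ('c \<Rightarrow> 'f) \<Rightarrow> ('d \<Rightarrow> 'f)" where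
  "H_map nu C0 ind0 m0 C1 ind1 m1 h = lin_ext C0 ind0 (\<lambda>p a x y.
      fsum (\<lambda>n. \<Sum>u\<in>{1..n}.
        nu_eval nu ((ctilde (-1) ind1 ind1 C1 m1 ^^ (n - u))
           (ctilde 1 ind0 ind1 C1 h ((ctilde (-1) ind0 ind0 C0 m0 ^^ (u - 1)) (gen a p x)))) y))"

definition chain_homotopy :: "(int \<Rightarrow> 'f::ab_group_add set) \<Rightarrow> 'c set \<Rightarrow> ('c \<Rightarrow> nat) \<Rightarrow> 'd set \<Rightarrow> ('d \<Rightarrow> nat) \<Rightarrow>
    (int \<Rightarrow> ('c \<Rightarrow> 'f) \<Rightarrow> ('c \<Rightarrow> 'f)) \<Rightarrow> (int \<Rightarrow> ('d \<Rightarrow> 'f) \<Rightarrow> ('d \<Rightarrow> 'f)) \<Rightarrow>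
    (int \<Rightarrow> ('c \<Rightarrow> 'f) \<Rightarrow> ('d \<Rightarrow> 'f)) \<Rightarrow> (int \<Rightarrow> ('c \<Rightarrow> 'f) \<Rightarrow> ('d \<Rightarrow> 'f)) \<Rightarrow>
    (int \<Rightarrow> ('c \<Rightarrow> 'f) \<Rightarrow> ('d \<Rightarrow> 'f)) \<Rightarrow> bool" where
  "chain_homotopy gF C0 ind0 C1 ind1 d0 d1 Psi Psi' H \<longleftrightarrow>
     (\<forall>N phi. chain_el gF C0 ind0 N phi \<longrightarrow>
        chain_el gF C1 ind1 (N + 1) (H N phi) \<and>
        (\<forall>y\<in>C1. Psi N phi y - Psi' N phi y = d1 (N + 1) (H N phi) y + H (N - 1) (d0 N phi) y))"

end

theory Submission
  imports Defs
begin

lemma sgnz_0[simp]: "sgnz 0 v = v" by (simp add: sgnz_def)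
lemma sgnz_zero[simp]: "sgnz k 0 = (0::'g::ab_group_add)" by (simp add: sgnz_def)
lemma sgnz_add_arg: "sgnz k (v + w) = sgnz k v + sgnz k w" by (simp add: sgnz_def)
lemma sgnz_minus_arg: "sgnz k (- v) = - sgnz k v" by (simp add: sgnz_def)
lemma sgnz_diff_arg: "sgnz k (v - w) = sgnz k v - sgnz k w" by (simp add: sgnz_def)
lemma sgnz_sgnz: "sgnz k (sgnz l v) = sgnz (k + l) v" by (auto simp add: sgnz_def)
lemma sgnz_cong: "even (k - l) \<Longrightarrow> sgnz k v = sgnz l v"
  unfolding sgnz_def by auto
lemma sgnz_sum: "sgnz k (sum f A) = (\<Sum>x\<in>A. sgnz k (f x))"
  by (simp add: sgnz_def sum_negf)
lemma sgnz_odd: "odd k \<Longrightarrow> sgnz k v = - v" by (simp add: sgnz_def)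
lemma sgnz_even: "even k \<Longrightarrow> sgnz k v = v" by (simp add: sgnz_def)
lemma sgnz_if: "sgnz k (if b then v else 0) = (if b then sgnz k v else 0)" by simp

section \<open>Paths\<close>

fun lets :: "('x \<Rightarrow> 'x \<Rightarrow> 'a) \<Rightarrow> ('x \<Rightarrow> 'x \<Rightarrow> int) \<Rightarrow> 'x \<Rightarrow> 'x list \<Rightarrow> ('a \<times> int) list" where
  "lets M dg c [] = []"
| "lets M dg c (c' # cs) = (M c c', dg c c') # lets M dg c' cs"

fun eps :: "('x \<Rightarrow> 'x \<Rightarrow> int) \<Rightarrow> int \<Rightarrow> 'x \<Rightarrow> 'x list \<Rightarrow> int" where
  "eps dg D c [] = 0"
| "eps dg D c (c' # cs) = D + eps dg (D + dg c c') c' cs"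

fun Qs :: "('x \<Rightarrow> 'x \<Rightarrow> int) \<Rightarrow> 'x \<Rightarrow> 'x list \<Rightarrow> int" where
  "Qs dg c [] = 0"
| "Qs dg c (c' # cs) = dg c c' + Qs dg c' cs"

definition paths :: "'x set \<Rightarrow> nat \<Rightarrow> 'x list set" where
  "paths C n = {cs. set cs \<subseteq> C \<and> length cs = n}"

lemma length_lets[simp]: "length (lets M dg c cs) = length cs"
  by (induction cs arbitrary: c) auto

lemma snd_lets: "sum_list (map snd (lets M dg c cs)) = Qs dg c cs"
  by (induction cs arbitrary: c) auto

lemma lets_append: "lets M dg c (cs @ ds) = lets M dg c cs @ lets M dg (last (c # cs)) ds"
  by (induction cs arbitrary: c) auto

lemma last_append2: "last (c # cs @ ds) = last (last (c # cs) # ds)"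
  by (induction cs arbitrary: c) auto

lemma eps_shift: "eps dg (D + k) c cs = eps dg D c cs + k * int (length cs)"
proof (induction cs arbitrary: c D)
  case (Cons a cs)
  have "eps dg (D + k + dg c a) a cs = eps dg ((D + dg c a) + k) a cs" by (simp add: algebra_simps)
  then show ?case using Cons.IH[of "D + dg c a" a] by (simp add: algebra_simps)
qed simp

lemma eps_append: "eps dg D c (cs @ ds) = eps dg D c cs + eps dg (D + Qs dg c cs) (last (c # cs)) ds"
  by (induction cs arbitrary: c D) (auto simp: algebra_simps)

lemma Qs_append: "Qs dg c (cs @ ds) = Qs dg c cs + Qs dg (last (c # cs)) ds"
  by (induction cs arbitrary: c) (auto simp: algebra_simps)

lemma Qs_tel: "(\<And>a b. dg a b = ii a - ii b - 1) \<Longrightarrow> Qs dg c cs = ii c - ii (last (c # cs)) - int (length cs)"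
proof (induction cs arbitrary: c)
  case (Cons a cs)
  then show ?case using Cons.IH[of a] Cons.prems[of c a] by simp
qed simp

lemma last_in: "c \<in> C \<Longrightarrow> set cs \<subseteq> C \<Longrightarrow> last (c # cs) \<in> C"
  by (induction cs arbitrary: c) auto

lemma finite_paths: "finite C \<Longrightarrow> finite (paths C n)"
proof (induction n)
  case 0 then show ?case by (simp add: paths_def)
next
  case (Suc n)
  have "paths C (Suc n) = (\<lambda>(c, cs). c # cs) ` (C \<times> paths C n)"
    by (auto simp: paths_def image_iff length_Suc_conv)
  then show ?case using Suc by simp
qed

lemma paths_0[simp]: "paths C 0 = {[]}" by (auto simp: paths_def)

lemma sum_paths_Suc: "finite C \<Longrightarrow>
  sum f (paths C (Suc n)) = (\<Sum>c\<in>C. \<Sum>cs\<in>paths C n. f (c # cs))"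
proof -
  assume fin: "finite C"
  have eq: "paths C (Suc n) = (\<lambda>(c, cs). c # cs) ` (C \<times> paths C n)"
    by (auto simp: paths_def image_iff length_Suc_conv)
  have inj: "inj_on (\<lambda>(c, cs). c # cs) (C \<times> paths C n)"
    by (auto simp: inj_on_def)
  have "sum f (paths C (Suc n)) = sum (f \<circ> (\<lambda>(c, cs). c # cs)) (C \<times> paths C n)"
    unfolding eq by (rule sum.reindex[OF inj])
  also have "\<dots> = (\<Sum>c\<in>C. \<Sum>cs\<in>paths C n. f (c # cs))"
    by (simp add: sum.cartesian_product comp_def split_def)
  finally show ?thesis .
qed

lemma sum_paths_append: "finite C \<Longrightarrow>
  sum f (paths C (m + n)) = (\<Sum>cs\<in>paths C m. \<Sum>ds\<in>paths C n. f (cs @ ds))"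
proof (induction m arbitrary: f)
  case 0 then show ?case by simp
next
  case (Suc m)
  have "sum f (paths C (Suc m + n)) = (\<Sum>c\<in>C. \<Sum>es\<in>paths C (m + n). f (c # es))"
    using Suc.prems by (simp add: sum_paths_Suc)
  also have "\<dots> = (\<Sum>c\<in>C. \<Sum>cs\<in>paths C m. \<Sum>ds\<in>paths C n. f (c # cs @ ds))"
    using Suc by simp
  also have "\<dots> = (\<Sum>cs\<in>paths C (Suc m). \<Sum>ds\<in>paths C n. f (cs @ ds))"
    using Suc.prems by (simp add: sum_paths_Suc)
  finally show ?case .
qed

lemma sum_paths_split: "finite C \<Longrightarrow> r < n \<Longrightarrow>
  sum f (paths C n) = (\<Sum>cs\<in>paths C r. \<Sum>c\<in>C. \<Sum>ds\<in>paths C (n - r - 1). f (cs @ c # ds))"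
proof -
  assume fin: "finite C" and r: "r < n"
  have "n = r + Suc (n - r - 1)" using r by simp
  then have "sum f (paths C n) = sum f (paths C (r + Suc (n - r - 1)))" by simp
  also have "\<dots> = (\<Sum>cs\<in>paths C r. \<Sum>es\<in>paths C (Suc (n - r - 1)). f (cs @ es))"
    by (rule sum_paths_append[OF fin])
  also have "\<dots> = (\<Sum>cs\<in>paths C r. \<Sum>c\<in>C. \<Sum>ds\<in>paths C (n - r - 1). f (cs @ c # ds))"
    using fin by (simp add: sum_paths_Suc)
  finally show ?thesis .
qed

lemma paths_length: "cs \<in> paths C n \<Longrightarrow> length cs = n" by (simp add: paths_def)
lemma paths_set: "cs \<in> paths C n \<Longrightarrow> set cs \<subseteq> C" by (simp add: paths_def)

section \<open>Triangle reindexing\<close>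

lemma tri_sum:
  fixes g :: "nat \<Rightarrow> nat \<Rightarrow> 'g::comm_monoid_add"
  assumes van: "\<And>i j. K < i + j + d \<Longrightarrow> g i j = 0"
  shows "(\<Sum>n\<le>K. \<Sum>r\<in>{r. r + d \<le> n}. g r (n - r - d)) = (\<Sum>i\<le>K. \<Sum>j\<le>K. g i j)"
proof -
  let ?T = "{(i, j). i + j + d \<le> K}"
  have fT: "finite ?T"
    by (rule finite_subset[of _ "{..K} \<times> {..K}"]) auto
  have "(\<Sum>n\<le>K. \<Sum>r\<in>{r. r + d \<le> n}. g r (n - r - d)) =
        (\<Sum>(n, r)\<in>Sigma {..K} (\<lambda>n. {r. r + d \<le> n}). g r (n - r - d))"
    by (rule sum.Sigma) (auto intro: finite_subset[of _ "{..K}"])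
  also have "\<dots> = (\<Sum>(i, j)\<in>?T. g i j)"
    by (rule sum.reindex_bij_witness[where i = "\<lambda>(i, j). (i + j + d, i)" and j = "\<lambda>(n, r). (r, n - r - d)"])
       auto
  also have "\<dots> = (\<Sum>(i, j)\<in>{..K} \<times> {..K}. g i j)"
    by (rule sum.mono_neutral_left) (use van in \<open>force simp: not_le\<close>)+
  also have "\<dots> = (\<Sum>i\<le>K. \<Sum>j\<le>K. g i j)"
    by (rule sum.cartesian_product[symmetric])
  finally show ?thesis .
qed

lemma tri_set0: "{..n} = {r. r + 0 \<le> (n::nat)}" by auto
lemma tri_set1: "{..<n} = {r. r + 1 \<le> (n::nat)}" by auto
lemma tri_set2: "{..<n - 1} = {r. r + 2 \<le> (n::nat)}" by auto

section \<open>Dual functionals\<close>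

definition E :: "('t \<Rightarrow> 'f::ab_group_add) \<Rightarrow> (bool \<times> 't) list \<Rightarrow> 'f" where
  "E \<Phi> ws = sum_list (map (\<lambda>(s, t). if s then \<Phi> t else - \<Phi> t) ws)"

lemma E_Nil[simp]: "E \<Phi> [] = 0" by (simp add: E_def)
lemma E_Cons: "E \<Phi> (w # ws) = (if fst w then \<Phi> (snd w) else - \<Phi> (snd w)) + E \<Phi> ws"
  by (simp add: E_def split_def)
lemma E_append: "E \<Phi> (xs @ ys) = E \<Phi> xs + E \<Phi> ys" by (simp add: E_def)

definition star :: "('x \<Rightarrow> 'y \<Rightarrow> 'a) \<Rightarrow> ('x \<Rightarrow> 'y \<Rightarrow> int) \<Rightarrow> bool \<Rightarrow> 'y set \<Rightarrow>
    (('f \<times> int) \<times> ('a \<times> int) list \<times> 'y \<Rightarrow> 'g::ab_group_add) \<Rightarrow>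
    ('f \<times> int) \<times> ('a \<times> int) list \<times> 'x \<Rightarrow> 'g" where
  "star c dg od D \<Phi> t = (case t of (ap, gs, x) \<Rightarrow>
     \<Sum>y\<in>D. sgnz (if od then snd ap + sum_list (map snd gs) else 0) (\<Phi> (ap, gs @ [(c x y, dg x y)], y)))"

lemma star_simp: "star c dg od D \<Phi> (ap, gs, x) =
   (\<Sum>y\<in>D. sgnz (if od then snd ap + sum_list (map snd gs) else 0) (\<Phi> (ap, gs @ [(c x y, dg x y)], y)))"
  by (simp add: star_def)

lemma E_ctilde:
  assumes fin: "finite D"
  shows "E \<Phi> (ctilde e ic jd D c ws) = E (star c (\<lambda>x y. int (ic x) - int (jd y) + e) (odd e) D \<Phi>) ws"
proof (induction ws)
  case Nil then show ?case by (simp add: ctilde_def)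
next
  case (Cons w ws)
  obtain s ap gs x where w: "w = (s, ap, gs, x)" by (cases w) auto
  have dist: "distinct (sorted_list_of_set D)" and st: "set (sorted_list_of_set D) = D"
    using fin by auto
  let ?De = "snd ap + sum_list (map snd gs)"
  let ?F = "\<lambda>y. \<Phi> (ap, gs @ [(c x y, int (ic x) - int (jd y) + e)], y)"
  have "E \<Phi> (map (\<lambda>y. (s = even (e * ?De), ap, gs @ [(c x y, int (ic x) - int (jd y) + e)], y))
            (sorted_list_of_set D))
      = sum_list (map (\<lambda>y. if s = even (e * ?De) then ?F y else - ?F y) (sorted_list_of_set D))"
    by (simp add: E_def comp_def)
  also have "\<dots> = (\<Sum>y\<in>D. if s = even (e * ?De) then ?F y else - ?F y)"
    by (simp only: sum_list_distinct_conv_sum_set[OF dist] st)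
  also have "\<dots> = (\<Sum>y\<in>D. if s then sgnz (if odd e then ?De else 0) (?F y) else - sgnz (if odd e then ?De else 0) (?F y))"
  proof (rule sum.cong[OF refl])
    fix y
    show "(if s = even (e * ?De) then ?F y else - ?F y) = (if s then sgnz (if odd e then ?De else 0) (?F y) else - sgnz (if odd e then ?De else 0) (?F y))"
      by (cases s; cases "even e"; simp add: sgnz_def)
  qed
  also have "\<dots> = (if s then star c (\<lambda>x y. int (ic x) - int (jd y) + e) (odd e) D \<Phi> (ap, gs, x)
                else - star c (\<lambda>x y. int (ic x) - int (jd y) + e) (odd e) D \<Phi> (ap, gs, x))"
    by (cases s) (simp_all only: star_simp sum_negf if_True if_False)
  finally have *: "E \<Phi> (map (\<lambda>y. (s = even (e * ?De), ap, gs @ [(c x y, int (ic x) - int (jd y) + e)], y))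
            (sorted_list_of_set D)) = (if s then star c (\<lambda>x y. int (ic x) - int (jd y) + e) (odd e) D \<Phi> (ap, gs, x)
                else - star c (\<lambda>x y. int (ic x) - int (jd y) + e) (odd e) D \<Phi> (ap, gs, x))" .
  have "ctilde e ic jd D c (w # ws) = map (\<lambda>y. (s = even (e * ?De), ap, gs @ [(c x y, int (ic x) - int (jd y) + e)], y))
            (sorted_list_of_set D) @ ctilde e ic jd D c ws"
    by (simp add: ctilde_def w)
  then show ?case using * Cons.IH by (simp add: E_append E_Cons w)
qed

lemma E_funpow:
  fixes T :: "(bool \<times> 't) list \<Rightarrow> (bool \<times> 't) list" and S :: "('t \<Rightarrow> 'f::ab_group_add) \<Rightarrow> ('t \<Rightarrow> 'f)"
  assumes "\<And>\<Phi> ws. E \<Phi> (T ws) = E (S \<Phi>) ws"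
  shows "E \<Phi> ((T ^^ n) ws) = E ((S ^^ n) \<Phi>) ws"
proof (induction n arbitrary: \<Phi>)
  case 0 show ?case by simp
next
  case (Suc n)
  have "E \<Phi> ((T ^^ Suc n) ws) = E (S \<Phi>) ((T ^^ n) ws)" by (simp add: assms)
  also have "\<dots> = E ((S ^^ n) (S \<Phi>)) ws" by (rule Suc.IH)
  also have "\<dots> = E ((S ^^ Suc n) \<Phi>) ws" by (simp only: funpow_Suc_right comp_def)
  finally show ?case .
qed

definition NuF :: "(nat \<Rightarrow> 'f::ab_group_add \<Rightarrow> 'a list \<Rightarrow> 'f) \<Rightarrow> 'y \<Rightarrow> ('f \<times> int) \<times> ('a \<times> int) list \<times> 'y \<Rightarrow> 'f" where
  "NuF nu y t = (case t of (ap, gs, z) \<Rightarrow> if z = y then nu (Suc (length gs)) (fst ap) (map fst gs) else 0)"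

lemma NuF_simp: "NuF nu y (ap, gs, z) = (if z = y then nu (Suc (length gs)) (fst ap) (map fst gs) else 0)"
  by (simp add: NuF_def)

lemma nu_eval_E: "nu_eval nu ws y = E (NuF nu y) ws"
proof -
  have "(\<lambda>(s, ap, gs, y'). if y' = y then (if s then nu (Suc (length gs)) (fst ap) (map fst gs)
                      else - nu (Suc (length gs)) (fst ap) (map fst gs)) else 0)
       = (\<lambda>(s, t). if s then NuF nu y t else - NuF nu y t)"
    by (rule ext) (simp add: NuF_def split_def)
  then show ?thesis unfolding nu_eval_def E_def by simp
qed

lemma E_gen: "E \<Phi> (gen a p x) = \<Phi> ((a, p), [], x)"
  by (simp add: gen_def E_def)

lemma nu_eval_iter:
  assumes "finite D"
  shows "nu_eval nu ((ctilde e ic ic D c ^^ n) (gen a p x)) y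
       = (star c (\<lambda>x y. int (ic x) - int (ic y) + e) (odd e) D ^^ n) (NuF nu y) ((a, p), [], x)"
  by (simp add: nu_eval_E E_funpow[OF E_ctilde[OF assms]] E_gen)

lemma sgnz_oddcong: "odd (k - l) \<Longrightarrow> sgnz k v = - sgnz l v"
  unfolding sgnz_def by auto

lemma star_pow_closed:
  assumes fin: "finite C"
  shows "((star M dg True C) ^^ n) \<Phi> (ap, gs, c) =
    (\<Sum>cs\<in>paths C n. sgnz (eps dg (snd ap + sum_list (map snd gs)) c cs) (\<Phi> (ap, gs @ lets M dg c cs, last (c # cs))))"
proof (induction n arbitrary: gs c)
  case 0 then show ?case by simp
next
  case (Suc n)
  let ?D = "snd ap + sum_list (map snd gs)"
  have "((star M dg True C) ^^ Suc n) \<Phi> (ap, gs, c) = star M dg True C (((star M dg True C) ^^ n) \<Phi>) (ap, gs, c)"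
    by simp
  also have "\<dots> = (\<Sum>c'\<in>C. sgnz ?D (((star M dg True C) ^^ n) \<Phi> (ap, gs @ [(M c c', dg c c')], c')))"
    by (simp add: star_simp)
  also have "\<dots> = (\<Sum>c'\<in>C. \<Sum>cs\<in>paths C n. sgnz (eps dg ?D c (c' # cs)) (\<Phi> (ap, gs @ lets M dg c (c' # cs), last (c # c' # cs))))"
    by (simp add: Suc.IH sgnz_sum sgnz_sgnz algebra_simps)
  also have "\<dots> = (\<Sum>cs\<in>paths C (Suc n). sgnz (eps dg ?D c cs) (\<Phi> (ap, gs @ lets M dg c cs, last (c # cs))))"
    by (simp add: sum_paths_Suc[OF fin])
  finally show ?case .
qed

definition PL :: "'x set \<Rightarrow> nat \<Rightarrow> 'x list set" where
  "PL C K = {cs. set cs \<subseteq> C \<and> length cs \<le> K}"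

lemma finite_PL: "finite C \<Longrightarrow> finite (PL C K)"
proof -
  assume "finite C"
  have "PL C K = (\<Union>n\<le>K. paths C n)" by (auto simp: PL_def paths_def)
  then show ?thesis using finite_paths[OF \<open>finite C\<close>] by (simp del: paths_def)
qed

lemma sum_PL: "finite C \<Longrightarrow> (\<Sum>n\<le>K. sum f (paths C n)) = sum f (PL C K)"
proof -
  assume fin: "finite C"
  have eq: "PL C K = (\<Union>n\<le>K. paths C n)" by (auto simp: PL_def paths_def)
  show ?thesis unfolding eq
    by (rule sum.UNION_disjoint[symmetric]) (auto simp: finite_paths[OF fin, unfolded paths_def] paths_def)
qed

locale curv =
  fixes gA :: "int \<Rightarrow> 'a::ab_group_add set" and dA :: "'a \<Rightarrow> 'a" and mul :: "'a \<Rightarrow> 'a \<Rightarrow> 'a"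
    and gF :: "int \<Rightarrow> 'f::ab_group_add set" and nu :: "nat \<Rightarrow> 'f \<Rightarrow> 'a list \<Rightarrow> 'f"
    and C :: "'x set" and ii :: "'x \<Rightarrow> int" and M :: "'x \<Rightarrow> 'x \<Rightarrow> 'a" and K :: nat
  assumes alg: "ainf_alg gA dA mul" and nonneg: "\<And>q. q < 0 \<Longrightarrow> gA q = {0}"
    and module: "ainf_module gA dA mul gF nu" and finC: "finite C"
    and ii_nn: "\<And>c. c \<in> C \<Longrightarrow> 0 \<le> ii c" and ii_K: "\<And>c. c \<in> C \<Longrightarrow> ii c \<le> int K"
    and M_deg: "\<And>c c'. c \<in> C \<Longrightarrow> c' \<in> C \<Longrightarrow> M c c' \<in> gA (ii c - ii c' - 1)"
begin

lemma gA_grp: "graded_group gA" using alg by (simp add: ainf_alg_def)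
lemma gA_0: "0 \<in> gA q" using gA_grp by (simp add: graded_group_def)
lemma gA_add: "x \<in> gA q \<Longrightarrow> y \<in> gA q \<Longrightarrow> x + y \<in> gA q" using gA_grp by (simp add: graded_group_def)
lemma gA_neg: "x \<in> gA q \<Longrightarrow> - x \<in> gA q" using gA_grp by (simp add: graded_group_def)
lemma gA_diff: "x \<in> gA q \<Longrightarrow> y \<in> gA q \<Longrightarrow> x - y \<in> gA q" using gA_add gA_neg by (metis diff_conv_add_uminus)
lemma gA_sgnz: "x \<in> gA q \<Longrightarrow> sgnz k x \<in> gA q" by (simp add: sgnz_def gA_neg)
lemma gA_sum: "(\<And>x. x \<in> S \<Longrightarrow> f x \<in> gA q) \<Longrightarrow> sum f S \<in> gA q"
  by (induction S rule: infinite_finite_induct) (auto simp: gA_0 gA_add)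
lemma dA_add: "dA (x + y) = dA x + dA y" using alg by (simp add: ainf_alg_def)
lemma dA_0: "dA 0 = 0" using dA_add[of 0 0] by simp
lemma dA_deg: "x \<in> gA q \<Longrightarrow> dA x \<in> gA (q - 1)" using alg by (simp add: ainf_alg_def)
lemma mul_deg: "x \<in> gA q \<Longrightarrow> y \<in> gA q' \<Longrightarrow> mul x y \<in> gA (q + q')" using alg by (simp add: ainf_alg_def)
lemma mul_addL: "mul (x + y) z = mul x z + mul y z" using alg by (simp add: ainf_alg_def)
lemma mul_addR: "mul x (y + z) = mul x y + mul x z" using alg by (simp add: ainf_alg_def)
lemma mul_0L: "mul 0 z = 0" using mul_addL[of 0 0 z] by simp
lemma mul_0R: "mul z 0 = 0" using mul_addR[of z 0 0] by simp

lemma gF_grp: "graded_group gF" using module by (simp add: ainf_module_def)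
lemma gF_0: "0 \<in> gF q" using gF_grp by (simp add: graded_group_def)
lemma gF_add: "x \<in> gF q \<Longrightarrow> y \<in> gF q \<Longrightarrow> x + y \<in> gF q" using gF_grp by (simp add: graded_group_def)
lemma gF_neg: "x \<in> gF q \<Longrightarrow> - x \<in> gF q" using gF_grp by (simp add: graded_group_def)
lemma gF_sgnz: "x \<in> gF q \<Longrightarrow> sgnz k x \<in> gF q" by (simp add: sgnz_def gF_neg)
lemma gF_sum: "(\<And>x. x \<in> S \<Longrightarrow> f x \<in> gF q) \<Longrightarrow> sum f S \<in> gF q"
  by (induction S rule: infinite_finite_induct) (auto simp: gF_0 gF_add)

lemma nu_add: "nu n (x + y) gs = nu n x gs + nu n y gs" using module by (simp add: ainf_module_def)
lemma nu_0: "nu n 0 gs = 0" using nu_add[of n 0 0 gs] by simp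
lemma nu_neg: "nu n (- x) gs = - nu n x gs"
  using nu_add[of n x "- x" gs] nu_0[of n gs] by (metis neg_eq_iff_add_eq_0 add.right_inverse)
lemma nu_sgnz: "nu n (sgnz k x) gs = sgnz k (nu n x gs)" by (simp add: sgnz_def nu_neg)
lemma nu_if: "nu n (if b then x else 0) gs = (if b then nu n x gs else 0)" by (simp add: nu_0)
lemma nu_sum: "nu n (sum f S) gs = (\<Sum>x\<in>S. nu n (f x) gs)"
  by (induction S rule: infinite_finite_induct) (auto simp: nu_0 nu_add)

lemma nu_slot_add: "nu n x (xs @ (u + v) # ys) = nu n x (xs @ u # ys) + nu n x (xs @ v # ys)"
proof -
  have "length xs < length (xs @ 0 # ys)" by simp
  then have "nu n x ((xs @ 0 # ys)[length xs := u + v]) =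
     nu n x ((xs @ 0 # ys)[length xs := u]) + nu n x ((xs @ 0 # ys)[length xs := v])"
    using module unfolding ainf_module_def by blast
  then show ?thesis by simp
qed
lemma nu_slot_0: "nu n x (xs @ 0 # ys) = 0"
  using nu_slot_add[of n x xs 0 0 ys] by simp
lemma nu_slot_neg: "nu n x (xs @ (- u) # ys) = - nu n x (xs @ u # ys)"
  using nu_slot_add[of n x xs u "- u" ys] nu_slot_0[of n x xs ys] by (metis neg_eq_iff_add_eq_0 add.right_inverse)
lemma nu_slot_sgnz: "nu n x (xs @ sgnz k u # ys) = sgnz k (nu n x (xs @ u # ys))"
  by (simp add: sgnz_def nu_slot_neg)
lemma nu_slot_sum: "nu n x (xs @ sum f S # ys) = (\<Sum>s\<in>S. nu n x (xs @ f s # ys))"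
  by (induction S rule: infinite_finite_induct) (auto simp: nu_slot_0 nu_slot_add)
lemma nu_slot_diff: "nu n x (xs @ (u - v) # ys) = nu n x (xs @ u # ys) - nu n x (xs @ v # ys)"
  using nu_slot_add[of n x xs u "- v" ys] nu_slot_neg[of n x xs v ys] by simp

lemma nu_van:
  assumes hom: "\<And>g q. (g, q) \<in> set L \<Longrightarrow> g \<in> gA q" and neg: "sum_list (map snd L) < 0"
  shows "nu n x (map fst L) = 0"
proof -
  have "\<exists>i<length L. snd (L ! i) < 0"
  proof (rule ccontr)
    assume "\<not> ?thesis"
    then have "\<forall>q\<in>set (map snd L). 0 \<le> q"
      by (metis (no_types, lifting) in_set_conv_nth length_map not_le_imp_less nth_map)
    then have "0 \<le> sum_list (map snd L)" by (metis sum_list_nonneg)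
    with neg show False by simp
  qed
  then obtain i where i: "i < length L" "snd (L ! i) < 0" by blast
  have "fst (L ! i) \<in> gA (snd (L ! i))" using hom[of "fst (L ! i)" "snd (L ! i)"] i(1) by (simp add: nth_mem)
  then have z: "fst (L ! i) = 0" using nonneg[OF i(2)] by simp
  have "map fst L = take i (map fst L) @ (map fst L ! i) # drop (Suc i) (map fst L)"
    using i(1) id_take_nth_drop[of i "map fst L"] by simp
  also have "map fst L ! i = 0" using z i(1) by simp
  finally show ?thesis using nu_slot_0 by metis
qed

lemma nu_deg: "x \<in> gF p \<Longrightarrow> (\<And>g q. (g, q) \<in> set L \<Longrightarrow> g \<in> gA q) \<Longrightarrow>
   nu (Suc (length L)) x (map fst L) \<in> gF (p + sum_list (map snd L) + int (Suc (length L)) - 2)"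
proof -
  assume x: "x \<in> gF p" and hom: "\<And>g q. (g, q) \<in> set L \<Longrightarrow> g \<in> gA q"
  have "homog_list gA (map fst L) (map snd L)"
    unfolding homog_list_def using hom by (auto simp: nth_mem)
  then show ?thesis using module x unfolding ainf_module_def
    by (metis Suc_eq_plus1 diff_add_inverse2 le_add2 length_map)
qed

end

lemma sgnz_eq2: "k - l = 2 * t \<Longrightarrow> sgnz k v = sgnz l v"
  by (rule sgnz_cong) simp

context curv
begin

definition SP where "SP x gs = (\<Sum>s\<le>length gs. sgnz (int (s+1) * int (length gs - s))
   (nu (length gs - s + 1) (nu (s+1) x (take s gs)) (drop s gs)))"
definition DP where "DP p x gs qs = (\<Sum>r<length gs. sgnz (int (length gs) + p + sum_list (take r qs))
   (nu (length gs + 1) x (take r gs @ dA (gs ! r) # drop (Suc r) gs)))"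
definition PP where "PP x gs = (\<Sum>r<length gs - 1. sgnz (int r + 1)
   (nu (length gs) x (take r gs @ mul (gs ! r) (gs ! Suc r) # drop (Suc (Suc r)) gs)))"

lemma module_rel: "N \<ge> 1 \<Longrightarrow> a \<in> gF p \<Longrightarrow> homog_list gA gs qs \<Longrightarrow> length gs = N - 1 \<Longrightarrow>
        (\<Sum>s\<in>{1..N}. sgnz (int s * int (N - s))
            (nu (N - s + 1) (nu s a (take (s - 1) gs)) (drop (s - 1) gs)))
      + (\<Sum>r\<in>{1..N}. \<Sum>s\<in>{1..N - r}.
           sgnz (int r + int s * int (N - r - s) + (int s - 2) * (p + sum_list (take (r - 1) qs)))
             (nu (r + (N - r - s) + 1) a
                (take (r - 1) gs @ [mu dA mul s (take s (drop (r - 1) gs))] @ drop (r - 1 + s) gs)))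
        = 0"
  using module unfolding ainf_module_def by blast

lemma rel3:
  assumes x: "x \<in> gF p" and hom: "homog_list gA gs qs"
  shows "SP x gs + DP p x gs qs + PP x gs = 0"
proof -
  define n where "n = length gs"
  have lq: "length qs = n" using hom by (simp add: homog_list_def n_def)
  define B where "B r s = sgnz (int r + int s * int (n + 1 - r - s) + (int s - 2) * (p + sum_list (take (r - 1) qs)))
             (nu (r + (n + 1 - r - s) + 1) x
                (take (r - 1) gs @ [mu dA mul s (take s (drop (r - 1) gs))] @ drop (r - 1 + s) gs))" for r s
  define Dt where "Dt r = sgnz (int n + p + sum_list (take r qs))
   (nu (n + 1) x (take r gs @ dA (gs ! r) # drop (Suc r) gs))" for r
  define Pt where "Pt r = sgnz (int r + 1)
   (nu n x (take r gs @ mul (gs ! r) (gs ! Suc r) # drop (Suc (Suc r)) gs))" for r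
  have R: "(\<Sum>s\<in>{1..n+1}. sgnz (int s * int (n + 1 - s))
            (nu (n + 1 - s + 1) (nu s x (take (s - 1) gs)) (drop (s - 1) gs)))
      + (\<Sum>r\<in>{1..n+1}. \<Sum>s\<in>{1..n + 1 - r}. B r s) = 0"
    unfolding B_def by (rule module_rel) (use x hom in \<open>auto simp: n_def\<close>)
  have S: "(\<Sum>s\<in>{1..n+1}. sgnz (int s * int (n + 1 - s))
            (nu (n + 1 - s + 1) (nu s x (take (s - 1) gs)) (drop (s - 1) gs))) = SP x gs"
  proof -
    have "(\<Sum>s\<in>{1..n+1}. sgnz (int s * int (n + 1 - s))
            (nu (n + 1 - s + 1) (nu s x (take (s - 1) gs)) (drop (s - 1) gs)))
        = (\<Sum>s\<in>{0..n}. sgnz (int (Suc s) * int (n + 1 - Suc s))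
            (nu (n + 1 - Suc s + 1) (nu (Suc s) x (take (Suc s - 1) gs)) (drop (Suc s - 1) gs)))"
      using sum.shift_bounds_cl_Suc_ivl[of "\<lambda>s. sgnz (int s * int (n + 1 - s))
            (nu (n + 1 - s + 1) (nu s x (take (s - 1) gs)) (drop (s - 1) gs))" 0 n] by simp
    also have "\<dots> = SP x gs" unfolding SP_def n_def[symmetric] atLeast0AtMost
      by (rule sum.cong) (auto simp: algebra_simps)
    finally show ?thesis .
  qed
  have inner: "(\<Sum>s\<in>{1..n - r}. B (Suc r) s) = (if r < n then Dt r else 0) + (if Suc r < n then Pt r else 0)"
    if r: "r \<le> n" for r
  proof -
    have B1: "B (Suc r) 1 = Dt r" if "r < n"
    proof -
      have mu1: "mu dA mul (Suc 0) (take (Suc 0) (drop r gs)) = dA (gs ! r)" using that by (simp add: mu_def n_def)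
      have idx: "Suc (Suc (r + (n - Suc r))) = Suc n" using that by simp
      show ?thesis unfolding B_def Dt_def
        apply (simp add: mu1 idx)
        apply (rule sgnz_eq2[where t = "- p - sum_list (take r qs)"])
        using that by (simp add: of_nat_diff algebra_simps)
    qed
    have B2: "B (Suc r) 2 = Pt r" if "Suc r < n"
    proof -
      have mu2: "mu dA mul 2 (take 2 (drop r gs)) = mul (gs ! r) (gs ! Suc r)" using that
        by (simp add: mu_def n_def numeral_2_eq_2)
      have mu2': "mu dA mul (Suc (Suc 0)) (take (Suc (Suc 0)) (drop r gs)) = mul (gs ! r) (gs ! Suc r)"
        using mu2 by (simp add: numeral_2_eq_2)
      have idx: "Suc r + (n + 1 - Suc r - 2) + 1 = n" using that by simp
      have "B (Suc r) 2 = sgnz (int (Suc r) + 2 * int (n + 1 - Suc r - 2)) (nu n x (take r gs @ mul (gs ! r) (gs ! Suc r) # drop (Suc (Suc r)) gs))"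
        unfolding B_def idx by (simp add: numeral_2_eq_2 mu2')
      also have "\<dots> = Pt r" unfolding Pt_def
        by (rule sgnz_eq2[where t = "int (n + 1 - Suc r - 2)"]) simp
      finally show ?thesis .
    qed
    have B3: "B (Suc r) s = 0" if "3 \<le> s" for s
    proof -
      have "mu dA mul s (take s (drop r gs)) = 0" using that by (simp add: mu_def)
      then show ?thesis unfolding B_def by (simp add: nu_slot_0)
    qed
    show ?thesis
    proof (cases "n - r")
      case 0
      then have "\<not> r < n" by simp
      then show ?thesis using 0 by simp
    next
      case (Suc k)
      show ?thesis
      proof (cases k)
        case 0
        then have "n - r = 1" "r < n" "\<not> Suc r < n" using Suc by auto
        then show ?thesis using B1 by simp
      next
        case (Suc k')
        then have nr: "n - r = Suc (Suc k')" using \<open>n - r = Suc k\<close> by simp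
        then have rl: "r < n" "Suc r < n" by auto
        have "{1..n - r} = insert 1 (insert 2 {3..n - r})" using nr by auto
        then have "(\<Sum>s\<in>{1..n - r}. B (Suc r) s) = B (Suc r) 1 + (B (Suc r) 2 + (\<Sum>s\<in>{3..n - r}. B (Suc r) s))"
          by simp
        also have "(\<Sum>s\<in>{3..n - r}. B (Suc r) s) = 0" using B3 by simp
        finally show ?thesis using B1 B2 rl by simp
      qed
    qed
  qed
  have Bsum: "(\<Sum>r\<in>{1..n+1}. \<Sum>s\<in>{1..n + 1 - r}. B r s) = DP p x gs qs + PP x gs"
  proof -
    have "(\<Sum>r\<in>{1..n+1}. \<Sum>s\<in>{1..n + 1 - r}. B r s) = (\<Sum>r\<in>{0..n}. \<Sum>s\<in>{1..n + 1 - Suc r}. B (Suc r) s)"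
      using sum.shift_bounds_cl_Suc_ivl[of "\<lambda>r. \<Sum>s\<in>{1..n + 1 - r}. B r s" 0 n] by simp
    also have "\<dots> = (\<Sum>r\<le>n. (if r < n then Dt r else 0) + (if Suc r < n then Pt r else 0))"
      unfolding atLeast0AtMost
    proof (rule sum.cong[OF refl])
      fix r assume "r \<in> {..n}"
      then have "r \<le> n" by simp
      from inner[OF this] show "(\<Sum>s\<in>{1..n + 1 - Suc r}. B (Suc r) s) = (if r < n then Dt r else 0) + (if Suc r < n then Pt r else 0)"
        by simp
    qed
    also have "\<dots> = (\<Sum>r\<le>n. if r < n then Dt r else 0) + (\<Sum>r\<le>n. if Suc r < n then Pt r else 0)"
      by (rule sum.distrib)
    also have "(\<Sum>r\<le>n. if r < n then Dt r else 0) = (\<Sum>r<n. Dt r)"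
    proof -
      have "(\<Sum>r\<le>n. if r < n then Dt r else 0) = sum Dt {r\<in>{..n}. r < n}"
        by (rule sum.inter_filter[symmetric]) simp
      also have "{r\<in>{..n}. r < n} = {..<n}" by auto
      finally show ?thesis .
    qed
    also have "(\<Sum>r\<le>n. if Suc r < n then Pt r else 0) = (\<Sum>r<n - 1. Pt r)"
    proof -
      have "(\<Sum>r\<le>n. if Suc r < n then Pt r else 0) = sum Pt {r\<in>{..n}. Suc r < n}"
        by (rule sum.inter_filter[symmetric]) simp
      also have "{r\<in>{..n}. Suc r < n} = {..<n - 1}" by auto
      finally show ?thesis .
    qed
    finally show ?thesis unfolding DP_def PP_def Dt_def Pt_def n_def by simp
  qed
  have "SP x gs + (DP p x gs qs + PP x gs) = 0" using R unfolding S Bsum .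
  then show ?thesis by (simp add: add.assoc)
qed

end

lemma split_S:
  assumes fin: "finite C"
    and van: "\<And>cs ds. set cs \<subseteq> C \<Longrightarrow> set ds \<subseteq> C \<Longrightarrow> K < length cs + length ds \<Longrightarrow> f (length cs) (cs @ ds) = 0"
  shows "(\<Sum>es\<in>PL C K. \<Sum>s\<le>length es. f s es) = (\<Sum>cs\<in>PL C K. \<Sum>ds\<in>PL C K. f (length cs) (cs @ ds))"
proof -
  have fP: "finite (PL C K)" by (rule finite_PL[OF fin])
  let ?T = "{(cs, ds). set cs \<subseteq> C \<and> set ds \<subseteq> C \<and> length cs + length ds \<le> K}"
  have "(\<Sum>es\<in>PL C K. \<Sum>s\<le>length es. f s es) = (\<Sum>(es, s)\<in>Sigma (PL C K) (\<lambda>es. {..length es}). f s es)"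
    by (rule sum.Sigma) (auto simp: fP)
  also have "\<dots> = (\<Sum>(cs, ds)\<in>?T. f (length cs) (cs @ ds))"
    by (rule sum.reindex_bij_witness[where i = "\<lambda>(cs, ds). (cs @ ds, length cs)" and j = "\<lambda>(es, s). (take s es, drop s es)"])
       (auto simp: PL_def dest: in_set_takeD in_set_dropD)
  also have "\<dots> = (\<Sum>(cs, ds)\<in>PL C K \<times> PL C K. f (length cs) (cs @ ds))"
    by (rule sum.mono_neutral_left) (auto simp: PL_def fP[unfolded PL_def] intro!: van)
  also have "\<dots> = (\<Sum>cs\<in>PL C K. \<Sum>ds\<in>PL C K. f (length cs) (cs @ ds))"
    by (rule sum.cartesian_product[symmetric])
  finally show ?thesis .
qed

lemma split_D:
  assumes fin: "finite C"
    and van: "\<And>cs c2 ds. set cs \<subseteq> C \<Longrightarrow> c2 \<in> C \<Longrightarrow> set ds \<subseteq> C \<Longrightarrow> K < length cs + length ds + 1 \<Longrightarrow> f (length cs) (cs @ c2 # ds) = 0"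
  shows "(\<Sum>es\<in>PL C K. \<Sum>r<length es. f r es) = (\<Sum>cs\<in>PL C K. \<Sum>c2\<in>C. \<Sum>ds\<in>PL C K. f (length cs) (cs @ c2 # ds))"
proof -
  have fP: "finite (PL C K)" by (rule finite_PL[OF fin])
  let ?T = "{(cs, c2, ds). set cs \<subseteq> C \<and> c2 \<in> C \<and> set ds \<subseteq> C \<and> length cs + length ds + 1 \<le> K}"
  have "(\<Sum>es\<in>PL C K. \<Sum>r<length es. f r es) = (\<Sum>(es, r)\<in>Sigma (PL C K) (\<lambda>es. {..<length es}). f r es)"
    by (rule sum.Sigma) (auto simp: fP)
  also have "\<dots> = (\<Sum>(cs, c2, ds)\<in>?T. f (length cs) (cs @ c2 # ds))"
  proof (rule sum.reindex_bij_witness[where i = "\<lambda>(cs, c2, ds). (cs @ c2 # ds, length cs)" and j = "\<lambda>(es, r). (take r es, es ! r, drop (Suc r) es)"])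
    fix a assume "a \<in> Sigma (PL C K) (\<lambda>es. {..<length es})"
    then obtain es r where a: "a = (es, r)" "set es \<subseteq> C" "length es \<le> K" "r < length es" by (auto simp: PL_def)
    then show "(case (case a of (es, r) \<Rightarrow> (take r es, es ! r, drop (Suc r) es)) of (cs, c2, ds) \<Rightarrow> (cs @ c2 # ds, length cs)) = a"
      by (simp add: id_take_nth_drop[symmetric])
    show "(case a of (es, r) \<Rightarrow> (take r es, es ! r, drop (Suc r) es)) \<in> ?T"
      using a by (auto dest: in_set_takeD in_set_dropD simp: nth_mem subset_iff)
    show "(case (case a of (es, r) \<Rightarrow> (take r es, es ! r, drop (Suc r) es)) of (cs, c2, ds) \<Rightarrow> f (length cs) (cs @ c2 # ds)) = (case a of (es, r) \<Rightarrow> f r es)"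
      using a by (simp add: id_take_nth_drop[symmetric])
  qed (auto simp: PL_def nth_append)
  also have "\<dots> = (\<Sum>(cs, c2, ds)\<in>PL C K \<times> C \<times> PL C K. f (length cs) (cs @ c2 # ds))"
    by (rule sum.mono_neutral_left) (auto simp: PL_def fP[unfolded PL_def] fin intro!: van)
  also have "\<dots> = (\<Sum>cs\<in>PL C K. \<Sum>c2\<in>C. \<Sum>ds\<in>PL C K. f (length cs) (cs @ c2 # ds))"
    by (simp add: sum.cartesian_product split_def)
  finally show ?thesis .
qed

lemma split_P:
  assumes fin: "finite C"
    and van: "\<And>cs c1 c2 ds. set cs \<subseteq> C \<Longrightarrow> c1 \<in> C \<Longrightarrow> c2 \<in> C \<Longrightarrow> set ds \<subseteq> C \<Longrightarrow> K < length cs + length ds + 2 \<Longrightarrow> f (length cs) (cs @ c1 # c2 # ds) = 0"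
  shows "(\<Sum>es\<in>PL C K. \<Sum>r<length es - 1. f r es) = (\<Sum>cs\<in>PL C K. \<Sum>c1\<in>C. \<Sum>c2\<in>C. \<Sum>ds\<in>PL C K. f (length cs) (cs @ c1 # c2 # ds))"
proof -
  have fP: "finite (PL C K)" by (rule finite_PL[OF fin])
  let ?T = "{(cs, c1, c2, ds). set cs \<subseteq> C \<and> c1 \<in> C \<and> c2 \<in> C \<and> set ds \<subseteq> C \<and> length cs + length ds + 2 \<le> K}"
  have "(\<Sum>es\<in>PL C K. \<Sum>r<length es - 1. f r es) = (\<Sum>(es, r)\<in>Sigma (PL C K) (\<lambda>es. {..<length es - 1}). f r es)"
    by (rule sum.Sigma) (auto simp: fP)
  also have "\<dots> = (\<Sum>(cs, c1, c2, ds)\<in>?T. f (length cs) (cs @ c1 # c2 # ds))"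
  proof (rule sum.reindex_bij_witness[where i = "\<lambda>(cs, c1, c2, ds). (cs @ c1 # c2 # ds, length cs)" and j = "\<lambda>(es, r). (take r es, es ! r, es ! Suc r, drop (Suc (Suc r)) es)"])
    fix a assume "a \<in> Sigma (PL C K) (\<lambda>es. {..<length es - 1})"
    then obtain es r where a: "a = (es, r)" "set es \<subseteq> C" "length es \<le> K" "Suc r < length es" by (auto simp: PL_def)
    have e: "take r es @ es ! r # es ! Suc r # drop (Suc (Suc r)) es = es"
    proof -
      have "drop r es = es ! r # drop (Suc r) es" using a(4) by (simp add: Cons_nth_drop_Suc)
      moreover have "drop (Suc r) es = es ! Suc r # drop (Suc (Suc r)) es" using a(4) by (simp add: Cons_nth_drop_Suc)
      ultimately show ?thesis by (metis append_take_drop_id)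
    qed
    show "(case (case a of (es, r) \<Rightarrow> (take r es, es ! r, es ! Suc r, drop (Suc (Suc r)) es)) of (cs, c1, c2, ds) \<Rightarrow> (cs @ c1 # c2 # ds, length cs)) = a"
      using a e by simp
    show "(case a of (es, r) \<Rightarrow> (take r es, es ! r, es ! Suc r, drop (Suc (Suc r)) es)) \<in> ?T"
      using a by (auto dest: in_set_takeD in_set_dropD simp: nth_mem subset_iff)
    show "(case (case a of (es, r) \<Rightarrow> (take r es, es ! r, es ! Suc r, drop (Suc (Suc r)) es)) of (cs, c1, c2, ds) \<Rightarrow> f (length cs) (cs @ c1 # c2 # ds)) = (case a of (es, r) \<Rightarrow> f r es)"
      using a e by simp
  qed (auto simp: PL_def nth_append)
  also have "\<dots> = (\<Sum>(cs, c1, c2, ds)\<in>PL C K \<times> C \<times> C \<times> PL C K. f (length cs) (cs @ c1 # c2 # ds))"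
    by (rule sum.mono_neutral_left) (auto simp: PL_def fP[unfolded PL_def] fin intro!: van)
  also have "\<dots> = (\<Sum>cs\<in>PL C K. \<Sum>c1\<in>C. \<Sum>c2\<in>C. \<Sum>ds\<in>PL C K. f (length cs) (cs @ c1 # c2 # ds))"
    by (simp add: sum.cartesian_product split_def)
  finally show ?thesis .
qed

lemma if_sum: "(if b then sum f S else 0) = (\<Sum>x\<in>S. if b then f x else 0)"
  by simp

context curv
begin

definition dg :: "'x \<Rightarrow> 'x \<Rightarrow> int" where "dg c c' = ii c - ii c' - 1"
definition Del where "Del c c' = dA (M c c') - (\<Sum>c''\<in>C. sgnz (ii c - ii c'') (mul (M c c'') (M c'' c')))"
definition G where "G a p c y = (\<Sum>n\<le>K. ((star M dg True C) ^^ n) (NuF nu y) ((a, p), [], c))"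

abbreviation gl where "gl c cs \<equiv> map fst (lets M dg c cs)"

lemma hom_lets: "c \<in> C \<Longrightarrow> set cs \<subseteq> C \<Longrightarrow> (g, q) \<in> set (lets M dg c cs) \<Longrightarrow> g \<in> gA q"
  by (induction cs arbitrary: c) (auto simp: dg_def M_deg)

lemma homog_of: "(\<And>g q. (g, q) \<in> set L \<Longrightarrow> g \<in> gA q) \<Longrightarrow> homog_list gA (map fst L) (map snd L)"
  unfolding homog_list_def by (auto simp: nth_mem)

lemma Qs_dg: "Qs dg c cs = ii c - ii (last (c # cs)) - int (length cs)"
  by (rule Qs_tel) (simp add: dg_def)

lemma Qs_neg: "c \<in> C \<Longrightarrow> set cs \<subseteq> C \<Longrightarrow> K < length cs \<Longrightarrow> Qs dg c cs < 0"
  using ii_K[of c] ii_nn[of "last (c # cs)"] last_in[of c C cs] by (simp add: Qs_dg)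

lemma mulMM_deg: "c \<in> C \<Longrightarrow> c'' \<in> C \<Longrightarrow> c' \<in> C \<Longrightarrow> mul (M c c'') (M c'' c') \<in> gA (dg c c' - 1)"
proof -
  assume h: "c \<in> C" "c'' \<in> C" "c' \<in> C"
  have m: "mul (M c c'') (M c'' c') \<in> gA (ii c - ii c'' - 1 + (ii c'' - ii c' - 1))"
    by (rule mul_deg[OF M_deg[OF h(1,2)] M_deg[OF h(2,3)]])
  have e: "ii c - ii c'' - 1 + (ii c'' - ii c' - 1) = dg c c' - 1" by (simp add: dg_def)
  show ?thesis using m unfolding e .
qed

lemma Del_deg: "c \<in> C \<Longrightarrow> c' \<in> C \<Longrightarrow> Del c c' \<in> gA (dg c c' - 1)"
proof -
  assume h: "c \<in> C" "c' \<in> C"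
  have d: "dA (M c c') \<in> gA (dg c c' - 1)" using dA_deg[OF M_deg[OF h]] by (simp add: dg_def)
  have s: "(\<Sum>c''\<in>C. sgnz (ii c - ii c'') (mul (M c c'') (M c'' c'))) \<in> gA (dg c c' - 1)"
    by (intro gA_sum gA_sgnz mulMM_deg) (use h in auto)
  show ?thesis unfolding Del_def by (rule gA_diff[OF d s])
qed

lemma SMpow: "((star M dg True C) ^^ n) \<Phi> (ap, gs, c) =
    (\<Sum>cs\<in>paths C n. sgnz (eps dg (snd ap + sum_list (map snd gs)) c cs) (\<Phi> (ap, gs @ lets M dg c cs, last (c # cs))))"
  by (rule star_pow_closed[OF finC])

lemma G_closed: "G a p c y = (\<Sum>cs\<in>PL C K. sgnz (eps dg p c cs)
     (if last (c # cs) = y then nu (Suc (length cs)) a (gl c cs) else 0))"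
proof -
  have "G a p c y = (\<Sum>n\<le>K. \<Sum>cs\<in>paths C n. sgnz (eps dg p c cs)
     (if last (c # cs) = y then nu (Suc (length cs)) a (gl c cs) else 0))"
    unfolding G_def SMpow NuF_simp by (simp cong: if_cong)
  also have "\<dots> = (\<Sum>cs\<in>PL C K. sgnz (eps dg p c cs)
     (if last (c # cs) = y then nu (Suc (length cs)) a (gl c cs) else 0))"
    by (rule sum_PL[OF finC])
  finally show ?thesis .
qed

end

lemma if_sgnz3: "(if b then sgnz e (u + v + w) else 0) =
   (if b then sgnz e u else 0) + (if b then sgnz e v else 0) + (if b then sgnz e (w::'g::ab_group_add) else 0)"
  by (simp add: sgnz_add_arg)

context curv
begin

context
  fixes a :: 'f and p :: int and c :: 'x and y :: 'x
  assumes aF: "a \<in> gF p" and cC: "c \<in> C" and yC: "y \<in> C"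
begin

definition "TS = (\<Sum>es\<in>PL C K. if last (c # es) = y then sgnz (eps dg p c es) (SP a (gl c es)) else 0)"
definition "TD = (\<Sum>es\<in>PL C K. if last (c # es) = y then sgnz (eps dg p c es) (DP p a (gl c es) (map snd (lets M dg c es))) else 0)"
definition "TP = (\<Sum>es\<in>PL C K. if last (c # es) = y then sgnz (eps dg p c es) (PP a (gl c es)) else 0)"

lemma TSDP: "TS + TD + TP = 0"
proof -
  have "TS + TD + TP = (\<Sum>es\<in>PL C K. if last (c # es) = y then sgnz (eps dg p c es)
    (SP a (gl c es) + DP p a (gl c es) (map snd (lets M dg c es)) + PP a (gl c es)) else 0)"
    unfolding TS_def TD_def TP_def if_sgnz3 by (simp add: sum.distrib)
  also have "\<dots> = 0"
  proof (rule sum.neutral, rule ballI)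
    fix es assume "es \<in> PL C K"
    then have "set es \<subseteq> C" by (simp add: PL_def)
    then have "homog_list gA (gl c es) (map snd (lets M dg c es))"
      by (intro homog_of) (rule hom_lets[OF cC])
    then show "(if last (c # es) = y then sgnz (eps dg p c es)
      (SP a (gl c es) + DP p a (gl c es) (map snd (lets M dg c es)) + PP a (gl c es)) else 0) = 0"
      using rel3[OF aF] by simp
  qed
  finally show ?thesis .
qed

definition "Tf cs ds = (if last (last (c # cs) # ds) = y then
   sgnz (eps dg p c (cs @ ds) + int (length cs + 1) * int (length ds))
     (nu (length ds + 1) (nu (length cs + 1) a (gl c cs)) (gl (last (c # cs)) ds)) else 0)"

lemma Tf_van:
  assumes cs: "set cs \<subseteq> C" and ds: "set ds \<subseteq> C" and K: "K < length cs + length ds"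
  shows "Tf cs ds = 0"
proof -
  let ?c1 = "last (c # cs)"
  have c1: "?c1 \<in> C" using last_in[OF cC cs] .
  have "Qs dg c (cs @ ds) < 0" using Qs_neg[OF cC, of "cs @ ds"] cs ds K by simp
  moreover have "Qs dg c (cs @ ds) = Qs dg c cs + Qs dg ?c1 ds" by (rule Qs_append)
  ultimately have "Qs dg c cs < 0 \<or> Qs dg ?c1 ds < 0" by linarith
  then show ?thesis
  proof
    assume "Qs dg c cs < 0"
    then have "nu (length cs + 1) a (gl c cs) = 0"
      by (intro nu_van) (auto simp: snd_lets intro: hom_lets[OF cC cs])
    then show ?thesis by (simp add: Tf_def nu_0)
  next
    assume "Qs dg ?c1 ds < 0"
    then have "nu (length ds + 1) (nu (length cs + 1) a (gl c cs)) (gl ?c1 ds) = 0"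
      by (intro nu_van) (auto simp: snd_lets intro: hom_lets[OF c1 ds])
    then show ?thesis by (simp add: Tf_def)
  qed
qed

definition "fS s es = (if last (c # es) = y then sgnz (eps dg p c es + int (s + 1) * int (length es - s))
   (nu (length es - s + 1) (nu (s + 1) a (take s (gl c es))) (drop s (gl c es))) else 0)"

lemma fS_eq: "fS (length cs) (cs @ ds) = Tf cs ds"
  unfolding fS_def Tf_def by (simp add: lets_append last_append2[symmetric] cong: if_cong)

lemma TS_eq: "TS = (\<Sum>cs\<in>PL C K. \<Sum>ds\<in>PL C K. Tf cs ds)"
proof -
  have "TS = (\<Sum>es\<in>PL C K. \<Sum>s\<le>length es. fS s es)"
    unfolding TS_def
  proof (rule sum.cong[OF refl])
    fix es
    show "(if last (c # es) = y then sgnz (eps dg p c es) (SP a (gl c es)) else 0) = (\<Sum>s\<le>length es. fS s es)"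
      unfolding SP_def fS_def by (simp add: sgnz_sum sgnz_sgnz if_sum cong: if_cong)
  qed
  also have "\<dots> = (\<Sum>cs\<in>PL C K. \<Sum>ds\<in>PL C K. fS (length cs) (cs @ ds))"
    by (rule split_S[OF finC]) (simp add: fS_eq Tf_van)
  finally show ?thesis by (simp add: fS_eq)
qed

lemma sign_T: "even ((eps dg (p + ii c - ii (last (c # cs)) - 1) (last (c # cs)) ds + eps dg p c cs)
   - (eps dg p c (cs @ ds) + int (length cs + 1) * int (length ds)))"
proof -
  let ?c1 = "last (c # cs)"
  have q: "p + ii c - ii ?c1 - 1 = (p + Qs dg c cs) + (int (length cs) - 1)" by (simp add: Qs_dg)
  have e1: "eps dg (p + ii c - ii ?c1 - 1) ?c1 ds = eps dg (p + Qs dg c cs) ?c1 ds + (int (length cs) - 1) * int (length ds)"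
    unfolding q by (rule eps_shift)
  have e2: "eps dg p c (cs @ ds) = eps dg p c cs + eps dg (p + Qs dg c cs) ?c1 ds" by (rule eps_append)
  have "(eps dg (p + ii c - ii ?c1 - 1) ?c1 ds + eps dg p c cs)
     - (eps dg p c (cs @ ds) + int (length cs + 1) * int (length ds)) = 2 * (- int (length ds))"
    unfolding e1 e2 by (simp add: algebra_simps)
  then show ?thesis by simp
qed

definition "hL c' ds cs = (if last (c' # ds) = y then (if last (c # cs) = c' then
   sgnz (eps dg (p + ii c - ii c' - 1) c' ds + eps dg p c cs)
     (nu (Suc (length ds)) (nu (Suc (length cs)) a (gl c cs)) (gl c' ds)) else 0) else 0)"

lemma L1: "G (G a p c c') (p + ii c - ii c' - 1) c' y = (\<Sum>ds\<in>PL C K. \<Sum>cs\<in>PL C K. hL c' ds cs)"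
proof -
  have "G (G a p c c') (p + ii c - ii c' - 1) c' y = (\<Sum>ds\<in>PL C K. sgnz (eps dg (p + ii c - ii c' - 1) c' ds)
     (if last (c' # ds) = y then nu (Suc (length ds)) (G a p c c') (gl c' ds) else 0))"
    by (rule G_closed)
  also have "\<dots> = (\<Sum>ds\<in>PL C K. \<Sum>cs\<in>PL C K. hL c' ds cs)"
  proof (rule sum.cong[OF refl])
    fix ds
    show "sgnz (eps dg (p + ii c - ii c' - 1) c' ds)
     (if last (c' # ds) = y then nu (Suc (length ds)) (G a p c c') (gl c' ds) else 0) = (\<Sum>cs\<in>PL C K. hL c' ds cs)"
      unfolding G_closed hL_def
      by (simp add: nu_sum nu_sgnz nu_if sgnz_sum sgnz_sgnz sgnz_if if_sum cong: if_cong)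
  qed
  finally show ?thesis .
qed

lemma L2: "(\<Sum>c'\<in>C. \<Sum>ds\<in>PL C K. \<Sum>cs\<in>PL C K. hL c' ds cs) = (\<Sum>cs\<in>PL C K. \<Sum>ds\<in>PL C K. \<Sum>c'\<in>C. hL c' ds cs)"
proof -
  have "(\<Sum>c'\<in>C. \<Sum>ds\<in>PL C K. \<Sum>cs\<in>PL C K. hL c' ds cs) = (\<Sum>ds\<in>PL C K. \<Sum>c'\<in>C. \<Sum>cs\<in>PL C K. hL c' ds cs)"
    by (rule sum.swap)
  also have "\<dots> = (\<Sum>ds\<in>PL C K. \<Sum>cs\<in>PL C K. \<Sum>c'\<in>C. hL c' ds cs)"
    by (rule sum.cong[OF refl], rule sum.swap)
  also have "\<dots> = (\<Sum>cs\<in>PL C K. \<Sum>ds\<in>PL C K. \<Sum>c'\<in>C. hL c' ds cs)"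
    by (rule sum.swap)
  finally show ?thesis .
qed

lemma L3: "set cs \<subseteq> C \<Longrightarrow> (\<Sum>c'\<in>C. hL c' ds cs) = Tf cs ds"
proof -
  assume cs: "set cs \<subseteq> C"
  let ?c1 = "last (c # cs)"
  have "(\<Sum>c'\<in>C. hL c' ds cs) = (\<Sum>c'\<in>C. if c' = ?c1 then hL c' ds cs else 0)"
    by (rule sum.cong[OF refl]) (auto simp: hL_def)
  also have "\<dots> = hL ?c1 ds cs" using sum.delta[OF finC, of ?c1 "\<lambda>c'. hL c' ds cs"] last_in[OF cC cs] by simp
  also have "\<dots> = Tf cs ds"
  proof -
    have s: "\<And>V. sgnz (eps dg (p + ii c - ii ?c1 - 1) ?c1 ds + eps dg p c cs) V =
       sgnz (eps dg p c (cs @ ds) + int (length cs + 1) * int (length ds)) V"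
      by (rule sgnz_cong[OF sign_T])
    show ?thesis unfolding hL_def Tf_def s by simp
  qed
  finally show ?thesis .
qed

lemma LHS_eq: "(\<Sum>c'\<in>C. G (G a p c c') (p + ii c - ii c' - 1) c' y) = (\<Sum>cs\<in>PL C K. \<Sum>ds\<in>PL C K. Tf cs ds)"
proof -
  have "(\<Sum>c'\<in>C. G (G a p c c') (p + ii c - ii c' - 1) c' y) = (\<Sum>c'\<in>C. \<Sum>ds\<in>PL C K. \<Sum>cs\<in>PL C K. hL c' ds cs)"
    by (simp add: L1)
  also have "\<dots> = (\<Sum>cs\<in>PL C K. \<Sum>ds\<in>PL C K. \<Sum>c'\<in>C. hL c' ds cs)" by (rule L2)
  also have "\<dots> = (\<Sum>cs\<in>PL C K. \<Sum>ds\<in>PL C K. Tf cs ds)"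
    by (rule sum.cong[OF refl], rule sum.cong[OF refl]) (simp add: L3 PL_def)
  finally show ?thesis .
qed

lemma last_mid: "last (c0 # cs @ c2 # ds) = last (c2 # ds)" by simp
lemma last_mid2: "last (c0 # cs @ c1 # c2 # ds) = last (c2 # ds)" by simp
lemma lets_mid: "lets M dg c0 (cs @ c2 # ds) = lets M dg c0 cs @ (M (last (c0 # cs)) c2, dg (last (c0 # cs)) c2) # lets M dg c2 ds"
  by (simp add: lets_append)
lemma lets_mid2: "lets M dg c0 (cs @ c1 # c2 # ds) = lets M dg c0 cs @ (M (last (c0 # cs)) c1, dg (last (c0 # cs)) c1) # (M c1 c2, dg c1 c2) # lets M dg c2 ds"
  by (simp add: lets_append)
lemma Qs_mid: "Qs dg c0 (cs @ c2 # ds) = Qs dg c0 cs + (dg (last (c0 # cs)) c2 + Qs dg c2 ds)"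
  by (simp add: Qs_append)
lemma Qs_mid2: "Qs dg c0 (cs @ c1 # c2 # ds) = Qs dg c0 cs + (dg (last (c0 # cs)) c1 + (dg c1 c2 + Qs dg c2 ds))"
  by (simp add: Qs_append)
lemma eps_mid: "eps dg D c0 (cs @ c2 # ds) = eps dg D c0 cs + (D + Qs dg c0 cs) + eps dg (D + Qs dg c0 cs + dg (last (c0 # cs)) c2) c2 ds"
  by (simp add: eps_append)
lemma eps_mid2: "eps dg D c0 (cs @ c1 # c2 # ds) = eps dg D c0 cs + (D + Qs dg c0 cs) +
   ((D + Qs dg c0 cs + dg (last (c0 # cs)) c1) + eps dg (D + Qs dg c0 cs + dg (last (c0 # cs)) c1 + dg c1 c2) c2 ds)"
  by (simp add: eps_append)

declare last.simps[simp del]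

definition "fD r es = (if last (c # es) = y then sgnz (eps dg p c es + (int (length es) + p + sum_list (take r (map snd (lets M dg c es)))))
   (nu (length es + 1) a (take r (gl c es) @ dA (gl c es ! r) # drop (Suc r) (gl c es))) else 0)"

lemma TD_1: "TD = (\<Sum>es\<in>PL C K. \<Sum>r<length es. fD r es)"
  unfolding TD_def
proof (rule sum.cong[OF refl])
  fix es
  show "(if last (c # es) = y then sgnz (eps dg p c es) (DP p a (gl c es) (map snd (lets M dg c es))) else 0) = (\<Sum>r<length es. fD r es)"
    unfolding DP_def fD_def by (simp add: sgnz_sum sgnz_sgnz if_sum cong: if_cong)
qed

definition "sD cs c2 ds = eps dg p c (cs @ c2 # ds) + (int (length cs + length ds + 1) + p + Qs dg c cs)"

definition "XD cs c2 ds = (if last (c2 # ds) = y then sgnz (sD cs c2 ds)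
   (nu (length cs + length ds + 2) a (gl c cs @ dA (M (last (c # cs)) c2) # gl c2 ds)) else 0)"

lemma fD_eq: "fD (length cs) (cs @ c2 # ds) = XD cs c2 ds"
  unfolding fD_def XD_def sD_def last_mid lets_mid by (simp add: snd_lets nth_append cong: if_cong)

lemma XD_van:
  assumes cs: "set cs \<subseteq> C" and c2: "c2 \<in> C" and ds: "set ds \<subseteq> C" and K: "K < length cs + length ds + 1"
  shows "XD cs c2 ds = 0"
proof -
  let ?c1 = "last (c # cs)"
  have c1: "?c1 \<in> C" using last_in[OF cC cs] .
  let ?L = "lets M dg c cs @ (dA (M ?c1 c2), dg ?c1 c2 - 1) # lets M dg c2 ds"
  have hom: "g \<in> gA q" if "(g, q) \<in> set ?L" for g q
  proof -
    have "dA (M ?c1 c2) \<in> gA (dg ?c1 c2 - 1)" using dA_deg[OF M_deg[OF c1 c2]] by (simp add: dg_def)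
    then show ?thesis using that hom_lets[OF cC cs] hom_lets[OF c2 ds] by auto
  qed
  have "Qs dg c (cs @ c2 # ds) < 0" using Qs_neg[OF cC, of "cs @ c2 # ds"] cs ds c2 K by simp
  then have neg: "sum_list (map snd ?L) < 0" by (simp add: snd_lets Qs_mid)
  have "nu (length cs + length ds + 2) a (map fst ?L) = 0" by (rule nu_van[OF hom neg])
  then show ?thesis by (simp add: XD_def)
qed

lemma TD_eq: "TD = (\<Sum>cs\<in>PL C K. \<Sum>c2\<in>C. \<Sum>ds\<in>PL C K. XD cs c2 ds)"
proof -
  have "TD = (\<Sum>cs\<in>PL C K. \<Sum>c2\<in>C. \<Sum>ds\<in>PL C K. fD (length cs) (cs @ c2 # ds))"
    unfolding TD_1 by (rule split_D[OF finC]) (simp add: fD_eq XD_van)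
  then show ?thesis by (simp add: fD_eq)
qed

definition "XDel cs c2 ds = (if last (c2 # ds) = y then sgnz (sD cs c2 ds)
   (nu (length cs + length ds + 2) a (gl c cs @ Del (last (c # cs)) c2 # gl c2 ds)) else 0)"
definition "XMM cs c2 ds c'' = (if last (c2 # ds) = y then sgnz (sD cs c2 ds + (ii (last (c # cs)) - ii c''))
   (nu (length cs + length ds + 2) a (gl c cs @ mul (M (last (c # cs)) c'') (M c'' c2) # gl c2 ds)) else 0)"

lemma XD_split: "XD cs c2 ds = XDel cs c2 ds + (\<Sum>c''\<in>C. XMM cs c2 ds c'')"
proof -
  let ?c1 = "last (c # cs)"
  have dAe: "dA (M ?c1 c2) = Del ?c1 c2 + (\<Sum>c''\<in>C. sgnz (ii ?c1 - ii c'') (mul (M ?c1 c'') (M c'' c2)))"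
    by (simp add: Del_def)
  show ?thesis
  proof (cases "last (c2 # ds) = y")
    case True
    then show ?thesis unfolding XD_def XDel_def XMM_def dAe
      by (simp add: nu_slot_add nu_slot_sum nu_slot_sgnz sgnz_add_arg sgnz_sum sgnz_sgnz)
  next
    case False
    then show ?thesis unfolding XD_def XDel_def XMM_def by simp
  qed
qed

definition "fP r es = (if last (c # es) = y then sgnz (eps dg p c es + (int r + 1))
   (nu (length es) a (take r (gl c es) @ mul (gl c es ! r) (gl c es ! Suc r) # drop (Suc (Suc r)) (gl c es))) else 0)"

lemma TP_1: "TP = (\<Sum>es\<in>PL C K. \<Sum>r<length es - 1. fP r es)"
  unfolding TP_def
proof (rule sum.cong[OF refl])
  fix es
  show "(if last (c # es) = y then sgnz (eps dg p c es) (PP a (gl c es)) else 0) = (\<Sum>r<length es - 1. fP r es)"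
    unfolding PP_def fP_def by (simp add: sgnz_sum sgnz_sgnz if_sum cong: if_cong)
qed

definition "XP cs c1 c2 ds = (if last (c2 # ds) = y then sgnz (eps dg p c (cs @ c1 # c2 # ds) + (int (length cs) + 1))
   (nu (length cs + length ds + 2) a (gl c cs @ mul (M (last (c # cs)) c1) (M c1 c2) # gl c2 ds)) else 0)"

lemma fP_eq: "fP (length cs) (cs @ c1 # c2 # ds) = XP cs c1 c2 ds"
  unfolding fP_def XP_def last_mid2 lets_mid2 by (simp add: nth_append cong: if_cong)

lemma XP_van:
  assumes cs: "set cs \<subseteq> C" and c1: "c1 \<in> C" and c2: "c2 \<in> C" and ds: "set ds \<subseteq> C" and K: "K < length cs + length ds + 2"
  shows "XP cs c1 c2 ds = 0"
proof -
  let ?c0 = "last (c # cs)"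
  have c0: "?c0 \<in> C" using last_in[OF cC cs] .
  let ?L = "lets M dg c cs @ (mul (M ?c0 c1) (M c1 c2), dg ?c0 c1 + dg c1 c2) # lets M dg c2 ds"
  have hom: "g \<in> gA q" if "(g, q) \<in> set ?L" for g q
  proof -
    have "mul (M ?c0 c1) (M c1 c2) \<in> gA (dg ?c0 c1 + dg c1 c2)"
      using mul_deg[OF M_deg[OF c0 c1] M_deg[OF c1 c2]] by (simp add: dg_def)
    then show ?thesis using that hom_lets[OF cC cs] hom_lets[OF c2 ds] by auto
  qed
  have "Qs dg c (cs @ c1 # c2 # ds) < 0" using Qs_neg[OF cC, of "cs @ c1 # c2 # ds"] cs ds c1 c2 K by simp
  then have neg: "sum_list (map snd ?L) < 0" by (simp add: snd_lets Qs_mid2)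
  have "nu (length cs + length ds + 2) a (map fst ?L) = 0" by (rule nu_van[OF hom neg])
  then show ?thesis by (simp add: XP_def)
qed

lemma TP_eq: "TP = (\<Sum>cs\<in>PL C K. \<Sum>c1\<in>C. \<Sum>c2\<in>C. \<Sum>ds\<in>PL C K. XP cs c1 c2 ds)"
proof -
  have "TP = (\<Sum>cs\<in>PL C K. \<Sum>c1\<in>C. \<Sum>c2\<in>C. \<Sum>ds\<in>PL C K. fP (length cs) (cs @ c1 # c2 # ds))"
    unfolding TP_1 by (rule split_P[OF finC]) (simp add: fP_eq XP_van)
  then show ?thesis by (simp add: fP_eq)
qed

lemma TP_swap: "TP = (\<Sum>cs\<in>PL C K. \<Sum>c2\<in>C. \<Sum>ds\<in>PL C K. \<Sum>c1\<in>C. XP cs c1 c2 ds)"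
  unfolding TP_eq
proof (rule sum.cong[OF refl])
  fix cs
  have "(\<Sum>c1\<in>C. \<Sum>c2\<in>C. \<Sum>ds\<in>PL C K. XP cs c1 c2 ds) = (\<Sum>c2\<in>C. \<Sum>c1\<in>C. \<Sum>ds\<in>PL C K. XP cs c1 c2 ds)"
    by (rule sum.swap)
  also have "\<dots> = (\<Sum>c2\<in>C. \<Sum>ds\<in>PL C K. \<Sum>c1\<in>C. XP cs c1 c2 ds)"
    by (rule sum.cong[OF refl], rule sum.swap)
  finally show "(\<Sum>c1\<in>C. \<Sum>c2\<in>C. \<Sum>ds\<in>PL C K. XP cs c1 c2 ds) = (\<Sum>c2\<in>C. \<Sum>ds\<in>PL C K. \<Sum>c1\<in>C. XP cs c1 c2 ds)" .
qed

lemma sign_MM: "odd ((sD cs c2 ds + (ii (last (c # cs)) - ii c1)) - (eps dg p c (cs @ c1 # c2 # ds) + (int (length cs) + 1)))"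
proof -
  let ?c0 = "last (c # cs)"
  have h4: "eps dg (p + Qs dg c cs + dg ?c0 c1 + dg c1 c2) c2 ds = eps dg (p + Qs dg c cs + dg ?c0 c2) c2 ds - int (length ds)"
  proof -
    have e: "p + Qs dg c cs + dg ?c0 c1 + dg c1 c2 = (p + Qs dg c cs + dg ?c0 c2) + (-1)" by (simp add: dg_def)
    show ?thesis unfolding e eps_shift by simp
  qed
  have dd: "(sD cs c2 ds + (ii ?c0 - ii c1)) - (eps dg p c (cs @ c1 # c2 # ds) + (int (length cs) + 1)) = 2 * int (length ds) + 1"
    unfolding sD_def unfolding eps_mid2 unfolding eps_mid unfolding h4 by (simp add: dg_def algebra_simps)
  show ?thesis by (simp only: dd) simp
qed

lemma XMM_XP: "XMM cs c2 ds c1 = - XP cs c1 c2 ds"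
  unfolding XMM_def XP_def sgnz_oddcong[OF sign_MM] by simp

definition "R cs c2 ds = (if last (c2 # ds) = y then
   sgnz (int (length cs) + eps dg p c cs + eps dg (p + Qs dg c cs + dg (last (c # cs)) c2 - 1) c2 ds)
   (nu (Suc (Suc (length cs + length ds))) a (gl c cs @ Del (last (c # cs)) c2 # gl c2 ds)) else 0)"

lemma sign_D: "odd (sD cs c2 ds - (int (length cs) + eps dg p c cs + eps dg (p + Qs dg c cs + dg (last (c # cs)) c2 - 1) c2 ds))"
proof -
  let ?c0 = "last (c # cs)"
  have h: "eps dg (p + Qs dg c cs + dg ?c0 c2 - 1) c2 ds = eps dg (p + Qs dg c cs + dg ?c0 c2) c2 ds - int (length ds)"
    using eps_shift[of dg "p + Qs dg c cs + dg ?c0 c2" "-1" c2 ds] by simp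
  have "sD cs c2 ds - (int (length cs) + eps dg p c cs + eps dg (p + Qs dg c cs + dg ?c0 c2 - 1) c2 ds)
     = 2 * (p + Qs dg c cs + int (length ds)) + 1"
    unfolding sD_def eps_mid h by (simp add: algebra_simps)
  then show ?thesis by simp
qed

lemma XDel_R: "XDel cs c2 ds = - R cs c2 ds"
  unfolding XDel_def R_def sgnz_oddcong[OF sign_D] by simp

lemma RHS_ij: "sgnz (int i) (((star M dg True C) ^^ i) (star Del (\<lambda>c c'. dg c c' - 1) False C
     (((star M dg True C) ^^ j) (NuF nu y))) ((a, p), [], c))
   = (\<Sum>cs\<in>paths C i. \<Sum>c2\<in>C. \<Sum>ds\<in>paths C j. R cs c2 ds)"
proof -
  have "sgnz (int i) (((star M dg True C) ^^ i) (star Del (\<lambda>c c'. dg c c' - 1) False C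
     (((star M dg True C) ^^ j) (NuF nu y))) ((a, p), [], c))
   = (\<Sum>cs\<in>paths C i. \<Sum>c2\<in>C. \<Sum>ds\<in>paths C j.
       sgnz (int i + (eps dg p c cs + eps dg (p + (Qs dg c cs + (dg (last (c # cs)) c2 - 1))) c2 ds))
       (if last (c2 # ds) = y then nu (Suc (Suc (length cs + length ds))) a (gl c cs @ Del (last (c # cs)) c2 # gl c2 ds) else 0))"
    unfolding SMpow star_simp NuF_simp
    by (simp add: snd_lets sgnz_sum sgnz_sgnz sgnz_if cong: if_cong)
  also have "\<dots> = (\<Sum>cs\<in>paths C i. \<Sum>c2\<in>C. \<Sum>ds\<in>paths C j. R cs c2 ds)"
  proof (intro sum.cong refl)
    fix cs c2 ds assume "cs \<in> paths C i"
    then have l: "length cs = i" by (simp add: paths_def)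
    have e: "p + (Qs dg c cs + (dg (last (c # cs)) c2 - 1)) = p + Qs dg c cs + dg (last (c # cs)) c2 - 1" by simp
    show "sgnz (int i + (eps dg p c cs + eps dg (p + (Qs dg c cs + (dg (last (c # cs)) c2 - 1))) c2 ds))
       (if last (c2 # ds) = y then nu (Suc (Suc (length cs + length ds))) a (gl c cs @ Del (last (c # cs)) c2 # gl c2 ds) else 0)
      = R cs c2 ds"
      unfolding R_def e l by (simp add: add.assoc)
  qed
  finally show ?thesis .
qed

lemma RHS_eq: "(\<Sum>i\<le>K. \<Sum>j\<le>K. sgnz (int i) (((star M dg True C) ^^ i) (star Del (\<lambda>c c'. dg c c' - 1) False C
     (((star M dg True C) ^^ j) (NuF nu y))) ((a, p), [], c)))
   = (\<Sum>cs\<in>PL C K. \<Sum>c2\<in>C. \<Sum>ds\<in>PL C K. R cs c2 ds)"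
proof -
  have "(\<Sum>i\<le>K. \<Sum>j\<le>K. sgnz (int i) (((star M dg True C) ^^ i) (star Del (\<lambda>c c'. dg c c' - 1) False C
     (((star M dg True C) ^^ j) (NuF nu y))) ((a, p), [], c)))
    = (\<Sum>i\<le>K. \<Sum>j\<le>K. \<Sum>cs\<in>paths C i. \<Sum>c2\<in>C. \<Sum>ds\<in>paths C j. R cs c2 ds)"
    by (simp add: RHS_ij)
  also have "\<dots> = (\<Sum>i\<le>K. \<Sum>cs\<in>paths C i. \<Sum>j\<le>K. \<Sum>c2\<in>C. \<Sum>ds\<in>paths C j. R cs c2 ds)"
    by (rule sum.cong[OF refl], rule sum.swap)
  also have "\<dots> = (\<Sum>i\<le>K. \<Sum>cs\<in>paths C i. \<Sum>c2\<in>C. \<Sum>j\<le>K. \<Sum>ds\<in>paths C j. R cs c2 ds)"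
    by (intro sum.cong refl sum.swap)
  also have "\<dots> = (\<Sum>i\<le>K. \<Sum>cs\<in>paths C i. \<Sum>c2\<in>C. \<Sum>ds\<in>PL C K. R cs c2 ds)"
    by (simp add: sum_PL[OF finC])
  also have "\<dots> = (\<Sum>cs\<in>PL C K. \<Sum>c2\<in>C. \<Sum>ds\<in>PL C K. R cs c2 ds)"
    by (rule sum_PL[OF finC])
  finally show ?thesis .
qed

lemma curv_main: "(\<Sum>c'\<in>C. G (G a p c c') (p + ii c - ii c' - 1) c' y)
   = (\<Sum>i\<le>K. \<Sum>j\<le>K. sgnz (int i) (((star M dg True C) ^^ i) (star Del (\<lambda>c c'. dg c c' - 1) False C
     (((star M dg True C) ^^ j) (NuF nu y))) ((a, p), [], c)))"
proof -
  let ?RR = "(\<Sum>cs\<in>PL C K. \<Sum>c2\<in>C. \<Sum>ds\<in>PL C K. R cs c2 ds)"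
  have TDx: "TD = - ?RR - TP"
  proof -
    have "TD = (\<Sum>cs\<in>PL C K. \<Sum>c2\<in>C. \<Sum>ds\<in>PL C K. XDel cs c2 ds + (\<Sum>c1\<in>C. XMM cs c2 ds c1))"
      unfolding TD_eq XD_split ..
    also have "\<dots> = (\<Sum>cs\<in>PL C K. \<Sum>c2\<in>C. \<Sum>ds\<in>PL C K. - R cs c2 ds + (\<Sum>c1\<in>C. - XP cs c1 c2 ds))"
      unfolding XDel_R XMM_XP ..
    also have "\<dots> = - ?RR - TP"
      unfolding TP_swap by (simp add: sum.distrib sum_negf sum_subtractf)
    finally show ?thesis .
  qed
  have "(\<Sum>c'\<in>C. G (G a p c c') (p + ii c - ii c' - 1) c' y) = TS"
    unfolding LHS_eq TS_eq ..
  also have "\<dots> = ?RR" using TSDP TDx by (simp add: algebra_simps)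
  also have "\<dots> = (\<Sum>i\<le>K. \<Sum>j\<le>K. sgnz (int i) (((star M dg True C) ^^ i) (star Del (\<lambda>c c'. dg c c' - 1) False C
     (((star M dg True C) ^^ j) (NuF nu y))) ((a, p), [], c)))"
    by (rule RHS_eq[symmetric])
  finally show ?thesis .
qed

end

end

definition good :: "(('f \<times> int) \<times> ('a::ab_group_add \<times> int) list \<times> 'z \<Rightarrow> 'g::ab_group_add) \<Rightarrow> bool" where
  "good \<Phi> \<longleftrightarrow> (\<forall>ap gs z i u v. i < length gs \<longrightarrow>
     \<Phi> (ap, gs[i := (u + v, snd (gs ! i))], z) = \<Phi> (ap, gs[i := (u, snd (gs ! i))], z) + \<Phi> (ap, gs[i := (v, snd (gs ! i))], z))"

lemma good_zero_at:
  assumes g: "good \<Phi>" and i: "i < length gs" and z: "fst (gs ! i) = 0"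
  shows "\<Phi> (ap, gs, w) = 0"
proof -
  have e: "gs[i := (0, snd (gs ! i))] = gs" using z by (metis i list_update_id prod.collapse)
  have "\<Phi> (ap, gs[i := (0 + 0, snd (gs ! i))], w) = \<Phi> (ap, gs[i := (0, snd (gs ! i))], w) + \<Phi> (ap, gs[i := (0, snd (gs ! i))], w)"
    using g i unfolding good_def by blast
  then show ?thesis using e by simp
qed

lemma good_zero_last: "good \<Phi> \<Longrightarrow> \<Phi> (ap, xs @ [(0, q)], w) = 0"
  by (rule good_zero_at[of _ "length xs"]) auto

lemma good_diff_last:
  assumes g: "good \<Phi>"
  shows "\<Phi> (ap, xs @ [(u - v, q)], w) = \<Phi> (ap, xs @ [(u, q)], w) - \<Phi> (ap, xs @ [(v, q)], w)"
proof -
  let ?gs = "xs @ [(0, q)]"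
  have "\<Phi> (ap, ?gs[length xs := ((u - v) + v, snd (?gs ! length xs))], w) =
        \<Phi> (ap, ?gs[length xs := (u - v, snd (?gs ! length xs))], w) + \<Phi> (ap, ?gs[length xs := (v, snd (?gs ! length xs))], w)"
    using g unfolding good_def by (metis length_append_singleton lessI)
  then show ?thesis by (simp add: algebra_simps)
qed

lemma map_snd_update: "i < length gs \<Longrightarrow> map snd (gs[i := (u, snd (gs ! i))]) = map snd gs"
  by (simp add: map_update) (metis list_update_id nth_map)

lemma good_star:
  fixes \<Phi> :: "('f \<times> int) \<times> ('a::ab_group_add \<times> int) list \<times> 'y \<Rightarrow> 'g::ab_group_add"
    and c :: "'x \<Rightarrow> 'y \<Rightarrow> 'a"
  assumes g: "good \<Phi>"
  shows "good (star c dg od D \<Phi>)"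
  unfolding good_def
proof (intro allI impI)
  fix ap :: "'f \<times> int" and gs :: "('a \<times> int) list" and x :: 'x and i :: nat and u v :: 'a
  assume i: "i < length gs"
  have upd: "gs[i := w] @ [l] = (gs @ [l])[i := w]" for w l using i by (simp add: list_update_append)
  have nth: "(gs @ [l]) ! i = gs ! i" for l using i by (simp add: nth_append)
  have i': "i < length (gs @ [l])" for l using i by simp
  have add: "\<Phi> (ap, (gs @ [l])[i := (u + v, snd ((gs @ [l]) ! i))], y) =
     \<Phi> (ap, (gs @ [l])[i := (u, snd ((gs @ [l]) ! i))], y) + \<Phi> (ap, (gs @ [l])[i := (v, snd ((gs @ [l]) ! i))], y)" for l y
    using g i' unfolding good_def by blast
  show "star c dg od D \<Phi> (ap, gs[i := (u + v, snd (gs ! i))], x) =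
        star c dg od D \<Phi> (ap, gs[i := (u, snd (gs ! i))], x) + star c dg od D \<Phi> (ap, gs[i := (v, snd (gs ! i))], x)"
    unfolding star_simp map_snd_update[OF i] upd
    using add by (simp add: nth sum.distrib[symmetric] sgnz_add_arg)
qed

lemma good_pow: fixes c :: "'x \<Rightarrow> 'x \<Rightarrow> 'a::ab_group_add" shows "good \<Phi> \<Longrightarrow> good (((star c dg od D) ^^ n) \<Phi>)"
  by (induction n) (auto intro: good_star)

lemma star_add: "star c dg od D (\<lambda>t. \<Phi> t + \<Psi> t) t0 = star c dg od D \<Phi> t0 + star c dg od D \<Psi> t0"
  by (cases t0) (simp add: star_simp sgnz_add_arg sum.distrib)
lemma star_diff: "star c dg od D (\<lambda>t. \<Phi> t - \<Psi> t) t0 = star c dg od D \<Phi> t0 - star c dg od D \<Psi> t0"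
  by (cases t0) (simp add: star_simp sgnz_diff_arg sum_subtractf)
lemma star_zero: "star c dg od D (\<lambda>t. 0) t0 = 0"
  by (cases t0) (simp add: star_simp)
lemma star_sum: "star c dg od D (\<lambda>t. \<Sum>i\<in>I. \<Phi> i t) t0 = (\<Sum>i\<in>I. star c dg od D (\<Phi> i) t0)"
  by (cases t0) (simp add: star_simp sgnz_sum sum.swap[of _ D])

lemma pow_add: fixes c :: "'x \<Rightarrow> 'x \<Rightarrow> 'a::ab_group_add" shows "((star c dg od D) ^^ n) (\<lambda>t. \<Phi> t + \<Psi> t) = (\<lambda>t. ((star c dg od D) ^^ n) \<Phi> t + ((star c dg od D) ^^ n) \<Psi> t)"
proof (induction n)
  case 0 then show ?case by simp
next
  case (Suc n) then show ?case by (simp add: star_add)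
qed
lemma pow_diff: fixes c :: "'x \<Rightarrow> 'x \<Rightarrow> 'a::ab_group_add" shows "((star c dg od D) ^^ n) (\<lambda>t. \<Phi> t - \<Psi> t) = (\<lambda>t. ((star c dg od D) ^^ n) \<Phi> t - ((star c dg od D) ^^ n) \<Psi> t)"
proof (induction n)
  case 0 then show ?case by simp
next
  case (Suc n) then show ?case by (simp add: star_diff)
qed
lemma pow_zero: fixes c :: "'x \<Rightarrow> 'x \<Rightarrow> 'a::ab_group_add" shows "((star c dg od D) ^^ n) (\<lambda>t. 0) = (\<lambda>t. 0)"
proof (induction n)
  case 0 then show ?case by simp
next
  case (Suc n) then show ?case by (simp add: star_zero)
qed
lemma pow_sum: fixes c :: "'x \<Rightarrow> 'x \<Rightarrow> 'a::ab_group_add" shows "((star c dg od D) ^^ n) (\<lambda>t. \<Sum>i\<in>I. \<Phi> i t) = (\<lambda>t. \<Sum>i\<in>I. ((star c dg od D) ^^ n) (\<Phi> i) t)"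
proof (induction n)
  case 0 then show ?case by simp
next
  case (Suc n) then show ?case by (simp add: star_sum)
qed

definition Van :: "(int \<Rightarrow> 'a set) \<Rightarrow> 'z set \<Rightarrow> ('z \<Rightarrow> int) \<Rightarrow> (('f \<times> int) \<times> ('a \<times> int) list \<times> 'z \<Rightarrow> 'g::zero) \<Rightarrow> bool" where
  "Van gA D B \<Phi> \<longleftrightarrow> (\<forall>ap gs z. z \<in> D \<longrightarrow> (\<forall>g q. (g, q) \<in> set gs \<longrightarrow> g \<in> gA q) \<longrightarrow>
      sum_list (map snd gs) + B z < 0 \<longrightarrow> \<Phi> (ap, gs, z) = 0)"

lemma van_star:
  assumes cdeg: "\<And>x y. x \<in> Dx \<Longrightarrow> y \<in> Dy \<Longrightarrow> c x y \<in> gA (dg x y)"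
    and v: "Van gA Dy B \<Phi>" and le: "\<And>x y. x \<in> Dx \<Longrightarrow> y \<in> Dy \<Longrightarrow> dg x y + B y \<le> B' x"
  shows "Van gA Dx B' (star c dg od Dy (\<Phi> :: _ \<Rightarrow> 'g::ab_group_add))"
  unfolding Van_def
proof (intro allI impI)
  fix ap gs x
  assume x: "x \<in> Dx" and hom: "\<forall>g q. (g, q) \<in> set gs \<longrightarrow> g \<in> gA q" and neg: "sum_list (map snd gs) + B' x < 0"
  have "\<Phi> (ap, gs @ [(c x y, dg x y)], y) = 0" if y: "y \<in> Dy" for y
  proof -
    have "sum_list (map snd (gs @ [(c x y, dg x y)])) + B y < 0" using neg le[OF x y] by simp
    moreover have "\<forall>g q. (g, q) \<in> set (gs @ [(c x y, dg x y)]) \<longrightarrow> g \<in> gA q" using hom cdeg[OF x y] by auto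
    ultimately show ?thesis using v y unfolding Van_def by blast
  qed
  then show "star c dg od Dy \<Phi> (ap, gs, x) = 0" by (simp add: star_simp)
qed

lemma van_mono: "Van gA D B \<Phi> \<Longrightarrow> (\<And>z. z \<in> D \<Longrightarrow> B z \<le> B' z) \<Longrightarrow> Van gA D B' \<Phi>"
  unfolding Van_def by (meson add_left_mono le_less_trans)

lemma van_pow:
  assumes cdeg: "\<And>x y. x \<in> D \<Longrightarrow> y \<in> D \<Longrightarrow> c x y \<in> gA (dg x y)"
    and dgi: "\<And>x y. x \<in> D \<Longrightarrow> y \<in> D \<Longrightarrow> dg x y = ii x - ii y - 1"
    and v: "Van gA D (\<lambda>z. ii z + \<beta>) \<Phi>"
  shows "Van gA D (\<lambda>z. ii z + \<beta> - int k) (((star c dg od D) ^^ k) (\<Phi> :: _ \<Rightarrow> 'g::ab_group_add))"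
proof (induction k)
  case 0 then show ?case using v by simp
next
  case (Suc k)
  show ?case unfolding funpow.simps comp_def
    by (rule van_star[OF cdeg Suc]) (simp_all add: dgi)
qed

lemma van_use: assumes "Van gA D B \<Phi>" "z \<in> D" "B z < 0" shows "\<Phi> (ap, [], z) = 0"
  using assms unfolding Van_def by (cases ap) auto

lemma fsum_eq: "(\<And>n. K < n \<Longrightarrow> f n = 0) \<Longrightarrow> fsum f = (\<Sum>n\<le>K. f n)"
  unfolding fsum_def
  by (rule sum.mono_neutral_left) (auto simp: not_le intro: ccontr)

lemma psi_reindex:
  fixes f :: "nat \<Rightarrow> nat \<Rightarrow> 'g::comm_monoid_add"
  assumes van: "\<And>i j. K < i + j + 1 \<Longrightarrow> f i j = 0"
  shows "(\<Sum>n\<le>K. \<Sum>u\<in>{1..n}. f (u - 1) (n - u)) = (\<Sum>i\<le>K. \<Sum>j\<le>K. f i j)"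
proof -
  have "(\<Sum>u\<in>{1..n}. f (u - 1) (n - u)) = (\<Sum>r\<in>{r. r + 1 \<le> n}. f r (n - r - 1))" for n
    by (rule sum.reindex_bij_witness[where i = "\<lambda>r. r + 1" and j = "\<lambda>u. u - 1"]) auto
  then have "(\<Sum>n\<le>K. \<Sum>u\<in>{1..n}. f (u - 1) (n - u)) = (\<Sum>n\<le>K. \<Sum>r\<in>{r. r + 1 \<le> n}. f r (n - r - 1))" by simp
  also have "\<dots> = (\<Sum>i\<le>K. \<Sum>j\<le>K. f i j)" by (rule tri_sum) (rule van)
  finally show ?thesis .
qed

lemma h_reindex:
  fixes f :: "nat \<Rightarrow> nat \<Rightarrow> 'g::comm_monoid_add"
  assumes van: "\<And>i j. K < i + j + 1 \<Longrightarrow> f i j = 0"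
  shows "(\<Sum>n\<le>K. \<Sum>u<n. f u (n - 1 - u)) = (\<Sum>i\<le>K. \<Sum>j\<le>K. f i j)"
proof -
  have "(\<Sum>n\<le>K. \<Sum>u<n. f u (n - 1 - u)) = (\<Sum>n\<le>K. \<Sum>r\<in>{r. r + 1 \<le> n}. f r (n - r - 1))"
    by (rule sum.cong[OF refl], rule sum.cong) auto
  also have "\<dots> = (\<Sum>i\<le>K. \<Sum>j\<le>K. f i j)" by (rule tri_sum) (rule van)
  finally show ?thesis .
qed

context curv
begin

lemma good_NuF: fixes y :: 'z shows "good (NuF nu y)"
  unfolding good_def NuF_def
proof (intro allI impI)
  fix ap :: "'f \<times> int" and gs :: "('a \<times> int) list" and z :: 'z and i :: nat and u v :: 'a
  assume i: "i < length gs"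
  have m: "map fst (gs[i := (w, snd (gs ! i))]) = (map fst gs)[i := w]" for w by (simp add: map_update)
  have "nu (Suc (length gs)) (fst ap) ((map fst gs)[i := u + v]) =
        nu (Suc (length gs)) (fst ap) ((map fst gs)[i := u]) + nu (Suc (length gs)) (fst ap) ((map fst gs)[i := v])"
    using module i unfolding ainf_module_def by simp
  then show "(case (ap, gs[i := (u + v, snd (gs ! i))], z) of (ap, gs, z) \<Rightarrow> if z = y then nu (Suc (length gs)) (fst ap) (map fst gs) else 0) =
       (case (ap, gs[i := (u, snd (gs ! i))], z) of (ap, gs, z) \<Rightarrow> if z = y then nu (Suc (length gs)) (fst ap) (map fst gs) else 0) +
       (case (ap, gs[i := (v, snd (gs ! i))], z) of (ap, gs, z) \<Rightarrow> if z = y then nu (Suc (length gs)) (fst ap) (map fst gs) else 0)"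
    by (simp add: m)
qed

lemma van_NuF: "(\<And>z. z \<in> D \<Longrightarrow> 0 \<le> B z) \<Longrightarrow> Van gA D B (NuF nu y)"
  unfolding Van_def NuF_def
proof (intro allI impI)
  fix ap gs z
  assume B: "\<And>z. z \<in> D \<Longrightarrow> 0 \<le> B z" and z: "z \<in> D" and hom: "\<forall>g q. (g, q) \<in> set gs \<longrightarrow> g \<in> gA q"
    and neg: "sum_list (map snd gs) + B z < 0"
  have "sum_list (map snd gs) < 0" using B[OF z] neg by simp
  then have "nu (Suc (length gs)) (fst ap) (map fst gs) = 0" using hom by (intro nu_van) auto
  then show "(case (ap, gs, z) of (ap, gs, z) \<Rightarrow> if z = y then nu (Suc (length gs)) (fst ap) (map fst gs) else 0) = 0"
    by simp
qed

lemma G_sum: "G (\<Sum>i\<in>I. f i) q c y = (\<Sum>i\<in>I. G (f i) q c y)"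
  unfolding G_closed by (simp add: nu_sum sgnz_sum if_sum sum.swap[of _ I] cong: if_cong)

lemma G_deg:
  assumes x: "x \<in> gF q" and cC: "c \<in> C" and yC: "y \<in> C"
  shows "G x q c y \<in> gF (q + ii c - ii y - 1)"
  unfolding G_closed
proof (intro gF_sum gF_sgnz)
  fix cs assume "cs \<in> PL C K"
  then have cs: "set cs \<subseteq> C" by (simp add: PL_def)
  show "(if last (c # cs) = y then nu (Suc (length cs)) x (gl c cs) else 0) \<in> gF (q + ii c - ii y - 1)"
  proof (cases "last (c # cs) = y")
    case True
    have eq: "q + sum_list (map snd (lets M dg c cs)) + int (Suc (length (lets M dg c cs))) - 2 = q + ii c - ii y - 1"
      using True by (simp add: snd_lets Qs_dg)
    have "nu (Suc (length (lets M dg c cs))) x (map fst (lets M dg c cs)) \<in>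
      gF (q + sum_list (map snd (lets M dg c cs)) + int (Suc (length (lets M dg c cs))) - 2)"
      by (rule nu_deg[OF x]) (rule hom_lets[OF cC cs])
    then have m: "nu (Suc (length cs)) x (gl c cs) \<in> gF (q + ii c - ii y - 1)"
      unfolding eq unfolding length_lets .
    show ?thesis using True m by simp
  qed (simp add: gF_0)
qed

end

locale comb =
  fixes gA :: "int \<Rightarrow> 'a::ab_group_add set" and dA :: "'a \<Rightarrow> 'a" and mul :: "'a \<Rightarrow> 'a \<Rightarrow> 'a"
    and gF :: "int \<Rightarrow> 'f::ab_group_add set" and nu :: "nat \<Rightarrow> 'f \<Rightarrow> 'a list \<Rightarrow> 'f"
    and C0 :: "'c::linorder set" and ind0 :: "'c \<Rightarrow> nat" and m0 :: "'c \<Rightarrow> 'c \<Rightarrow> 'a"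
    and C1 :: "'d::linorder set" and ind1 :: "'d \<Rightarrow> nat" and m1 :: "'d \<Rightarrow> 'd \<Rightarrow> 'a"
    and tau tau' h :: "'c \<Rightarrow> 'd \<Rightarrow> 'a"
  assumes alg: "ainf_alg gA dA mul"
    and nonneg: "\<And>q. q < 0 \<Longrightarrow> gA q = {0}"
    and module: "ainf_module gA dA mul gF nu"
    and fin0: "finite C0" and fin1: "finite C1"
    and m0c: "twisting_cocycle gA dA mul C0 ind0 m0"
    and m1c: "twisting_cocycle gA dA mul C1 ind1 m1"
    and tauf: "tau_family gA dA mul C0 ind0 m0 C1 ind1 m1 tau"
    and tauf': "tau_family gA dA mul C0 ind0 m0 C1 ind1 m1 tau'"
    and hf: "homotopy_family gA dA mul C0 ind0 m0 C1 ind1 m1 tau tau' h"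
begin

definition CC :: "('c + 'd) set" where "CC = Inl ` C0 \<union> Inr ` C1"
definition iiC :: "'c + 'd \<Rightarrow> int" where "iiC = case_sum (\<lambda>x. int (ind0 x) + 2) (\<lambda>y. int (ind1 y))"
definition MM :: "'c + 'd \<Rightarrow> 'c + 'd \<Rightarrow> 'a" where
  "MM u v = (case u of Inl x \<Rightarrow> (case v of Inl x' \<Rightarrow> m0 x x' | Inr y \<Rightarrow> h x y)
                     | Inr y \<Rightarrow> (case v of Inl x' \<Rightarrow> 0 | Inr y' \<Rightarrow> m1 y y'))"
definition KK :: nat where "KK = sum ind0 C0 + sum ind1 C1 + 2"

lemma iiC_simps[simp]: "iiC (Inl x) = int (ind0 x) + 2" "iiC (Inr y) = int (ind1 y)"
  by (simp_all add: iiC_def)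
lemma MM_simps[simp]: "MM (Inl x) (Inl x') = m0 x x'" "MM (Inl x) (Inr y) = h x y"
  "MM (Inr y) (Inl x) = 0" "MM (Inr y) (Inr y') = m1 y y'"
  by (simp_all add: MM_def)

lemma finCC: "finite CC" by (simp add: CC_def fin0 fin1)

lemma sum_CC: "sum f CC = (\<Sum>x\<in>C0. f (Inl x)) + (\<Sum>y\<in>C1. f (Inr y))"
proof -
  have "sum f CC = sum f (Inl ` C0) + sum f (Inr ` C1)"
    unfolding CC_def by (rule sum.union_disjoint) (auto simp: fin0 fin1)
  also have "\<dots> = (\<Sum>x\<in>C0. f (Inl x)) + (\<Sum>y\<in>C1. f (Inr y))"
    by (simp add: sum.reindex)
  finally show ?thesis .
qed

lemma gA0: "0 \<in> gA q" using alg by (simp add: ainf_alg_def graded_group_def)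

lemma ind0_Kn: "x \<in> C0 \<Longrightarrow> ind0 x + 2 \<le> KK"
proof -
  assume x: "x \<in> C0"
  have "ind0 x \<le> sum ind0 C0" by (rule member_le_sum) (auto simp: fin0 x)
  then show ?thesis by (simp add: KK_def)
qed
lemma ind1_Kn: "y \<in> C1 \<Longrightarrow> ind1 y \<le> KK"
proof -
  assume y: "y \<in> C1"
  have "ind1 y \<le> sum ind1 C1" by (rule member_le_sum) (auto simp: fin1 y)
  then show ?thesis by (simp add: KK_def)
qed
lemma ind0_K: "x \<in> C0 \<Longrightarrow> int (ind0 x) + 2 \<le> int KK"
  using ind0_Kn[of x] by linarith
lemma ind1_K: "y \<in> C1 \<Longrightarrow> int (ind1 y) \<le> int KK"
  using ind1_Kn[of y] by linarith

lemma m0_deg: "x \<in> C0 \<Longrightarrow> x' \<in> C0 \<Longrightarrow> m0 x x' \<in> gA (int (ind0 x) - int (ind0 x') - 1)"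
  using m0c by (simp add: twisting_cocycle_def)
lemma m1_deg: "y \<in> C1 \<Longrightarrow> y' \<in> C1 \<Longrightarrow> m1 y y' \<in> gA (int (ind1 y) - int (ind1 y') - 1)"
  using m1c by (simp add: twisting_cocycle_def)
lemma h_deg: "x \<in> C0 \<Longrightarrow> y \<in> C1 \<Longrightarrow> h x y \<in> gA (int (ind0 x) - int (ind1 y) + 1)"
  using hf by (simp add: homotopy_family_def)
lemma tau_deg: "tau_family gA dA mul C0 ind0 m0 C1 ind1 m1 t \<Longrightarrow> x \<in> C0 \<Longrightarrow> y \<in> C1 \<Longrightarrow> t x y \<in> gA (int (ind0 x) - int (ind1 y))"
  by (simp add: tau_family_def)

lemma MM_deg: "c \<in> CC \<Longrightarrow> c' \<in> CC \<Longrightarrow> MM c c' \<in> gA (iiC c - iiC c' - 1)"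
proof -
  assume c: "c \<in> CC" and c': "c' \<in> CC"
  show ?thesis
  proof (cases c)
    case (Inl x)
    then have x: "x \<in> C0" using c by (auto simp: CC_def)
    show ?thesis
    proof (cases c')
      case (Inl x')
      then have x': "x' \<in> C0" using c' by (auto simp: CC_def)
      have e: "iiC c - iiC c' - 1 = int (ind0 x) - int (ind0 x') - 1" using \<open>c = Inl x\<close> Inl by simp
      show ?thesis unfolding e using m0_deg[OF x x'] \<open>c = Inl x\<close> Inl by simp
    next
      case (Inr y)
      then have y: "y \<in> C1" using c' by (auto simp: CC_def)
      have e: "iiC c - iiC c' - 1 = int (ind0 x) - int (ind1 y) + 1" using \<open>c = Inl x\<close> Inr by simp
      show ?thesis unfolding e using h_deg[OF x y] \<open>c = Inl x\<close> Inr by simp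
    qed
  next
    case (Inr y)
    then have y: "y \<in> C1" using c by (auto simp: CC_def)
    show ?thesis
    proof (cases c')
      case (Inl x')
      then show ?thesis using \<open>c = Inr y\<close> by (simp add: gA0)
    next
      case (Inr y')
      then have y': "y' \<in> C1" using c' by (auto simp: CC_def)
      have e: "iiC c - iiC c' - 1 = int (ind1 y) - int (ind1 y') - 1" using \<open>c = Inr y\<close> Inr by simp
      show ?thesis unfolding e using m1_deg[OF y y'] \<open>c = Inr y\<close> Inr by simp
    qed
  qed
qed

sublocale cv: curv gA dA mul gF nu CC iiC MM KK
proof
  show "ainf_alg gA dA mul" by (rule alg)
  show "\<And>q. q < 0 \<Longrightarrow> gA q = {0}" by (rule nonneg)
  show "ainf_module gA dA mul gF nu" by (rule module)
  show "finite CC" by (rule finCC)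
  show "\<And>c. c \<in> CC \<Longrightarrow> 0 \<le> iiC c" by (auto simp: CC_def)
  show "\<And>c. c \<in> CC \<Longrightarrow> iiC c \<le> int KK" by (auto simp: CC_def ind0_K ind1_K ind1_Kn)
  show "\<And>c c'. c \<in> CC \<Longrightarrow> c' \<in> CC \<Longrightarrow> MM c c' \<in> gA (iiC c - iiC c' - 1)"
    by (rule MM_deg)
qed

abbreviation "S0 \<equiv> star m0 (\<lambda>x y. int (ind0 x) - int (ind0 y) - 1) True C0"
abbreviation "S1 \<equiv> star m1 (\<lambda>x y. int (ind1 x) - int (ind1 y) - 1) True C1"
abbreviation "Sh \<equiv> star h (\<lambda>x y. int (ind0 x) - int (ind1 y) + 1) True C1"
abbreviation "St t \<equiv> star t (\<lambda>x y. int (ind0 x) - int (ind1 y)) False C1"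

definition "PsiG t a p x y = fsum (\<lambda>n. \<Sum>u\<in>{1..n}. sgnz (int u - 1)
   ((S0 ^^ (u - 1)) (St t ((S1 ^^ (n - u)) (NuF nu y))) ((a, p), [], x)))"
definition "HG a p x y = fsum (\<lambda>n. \<Sum>u\<in>{1..n}.
   ((S0 ^^ (u - 1)) (Sh ((S1 ^^ (n - u)) (NuF nu y))) ((a, p), [], x)))"
definition "D0G a p x x' = fsum (\<lambda>n. (S0 ^^ n) (NuF nu x') ((a, p), [], x))"
definition "D1G a p w y = fsum (\<lambda>n. (S1 ^^ n) (NuF nu y) ((a, p), [], w))"

lemma EC0: "E \<Phi> (ctilde (- 1) ind0 ind0 C0 m0 ws) = E (S0 \<Phi>) ws"
  using E_ctilde[OF fin0, of \<Phi> "- 1" ind0 ind0 m0 ws] by simp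
lemma EC1: "E \<Phi> (ctilde (- 1) ind1 ind1 C1 m1 ws) = E (S1 \<Phi>) ws"
  using E_ctilde[OF fin1, of \<Phi> "- 1" ind1 ind1 m1 ws] by simp
lemma ECh: "E \<Phi> (ctilde 1 ind0 ind1 C1 h ws) = E (Sh \<Phi>) ws"
  using E_ctilde[OF fin1, of \<Phi> 1 ind0 ind1 h ws] by simp
lemma ECt: "E \<Phi> (ctilde 0 ind0 ind1 C1 t ws) = E (St t \<Phi>) ws"
  using E_ctilde[OF fin1, of \<Phi> 0 ind0 ind1 t ws] by simp

lemma B_td0: "twisted_diff nu C0 ind0 m0 N phi x' = (\<Sum>x\<in>C0. D0G (phi x) (N - int (ind0 x)) x x')"
  unfolding twisted_diff_def lin_ext_def D0G_def nu_eval_E E_funpow[OF EC0] E_gen ..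
lemma B_td1: "twisted_diff nu C1 ind1 m1 N psi y = (\<Sum>w\<in>C1. D1G (psi w) (N - int (ind1 w)) w y)"
  unfolding twisted_diff_def lin_ext_def D1G_def nu_eval_E E_funpow[OF EC1] E_gen ..
lemma B_psi: "Psi_map nu C0 ind0 m0 C1 ind1 m1 t N phi y = (\<Sum>x\<in>C0. PsiG t (phi x) (N - int (ind0 x)) x y)"
  unfolding Psi_map_def lin_ext_def PsiG_def nu_eval_E E_funpow[OF EC1] ECt E_funpow[OF EC0] E_gen ..
lemma B_H: "H_map nu C0 ind0 m0 C1 ind1 m1 h N phi y = (\<Sum>x\<in>C0. HG (phi x) (N - int (ind0 x)) x y)"
  unfolding H_map_def lin_ext_def HG_def nu_eval_E E_funpow[OF EC1] ECh E_funpow[OF EC0] E_gen ..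

end

lemma star_zero_fun: "star c dg od D (\<lambda>t. 0) = (\<lambda>t. 0)"
  by (rule ext) (rule star_zero)

lemma star_cong_D: "(\<And>ap gs z. z \<in> D \<Longrightarrow> \<Phi> (ap, gs, z) = \<Psi> (ap, gs, z)) \<Longrightarrow> star c dg od D \<Phi> = star c dg od D \<Psi>"
  by (rule ext) (auto simp: star_def split: prod.splits intro!: sum.cong)

lemma pow_cong_D:
  fixes c :: "'x \<Rightarrow> 'x \<Rightarrow> 'aa::ab_group_add"
  assumes eq: "\<And>ap gs z. z \<in> D \<Longrightarrow> \<Phi> (ap, gs, z) = \<Psi> (ap, gs, z)" and z: "z \<in> D"
  shows "((star c dg od D) ^^ n) \<Phi> (ap, gs, z) = ((star c dg od D) ^^ n) \<Psi> (ap, gs, z)"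
proof (cases n)
  case 0 then show ?thesis using eq z by simp
next
  case (Suc k)
  have "star c dg od D \<Phi> = star c dg od D \<Psi>" by (intro star_cong_D eq)
  then show ?thesis unfolding Suc funpow_Suc_right comp_def by simp
qed

context comb
begin

definition liftL :: "(('f \<times> int) \<times> ('a \<times> int) list \<times> ('c + 'd) \<Rightarrow> 'g) \<Rightarrow> ('f \<times> int) \<times> ('a \<times> int) list \<times> 'c \<Rightarrow> 'g" where
  "liftL \<Phi> t = (case t of (ap, gs, x) \<Rightarrow> \<Phi> (ap, gs, Inl x))"
definition liftR :: "(('f \<times> int) \<times> ('a \<times> int) list \<times> ('c + 'd) \<Rightarrow> 'g) \<Rightarrow> ('f \<times> int) \<times> ('a \<times> int) list \<times> 'd \<Rightarrow> 'g" where
  "liftR \<Phi> t = (case t of (ap, gs, y) \<Rightarrow> \<Phi> (ap, gs, Inr y))"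

abbreviation "SMM \<equiv> star MM cv.dg True CC"
abbreviation "SDc \<equiv> star cv.Del (\<lambda>c c'. cv.dg c c' - 1) False CC"

lemma BL: "liftL (SMM \<Phi>) t = S0 (liftL \<Phi>) t + Sh (liftR \<Phi>) t"
  by (cases t) (simp add: liftL_def liftR_def star_simp sum_CC cv.dg_def algebra_simps)

lemma BR: "good (\<Phi> :: ('f \<times> int) \<times> ('a \<times> int) list \<times> ('c + 'd) \<Rightarrow> 'g::ab_group_add) \<Longrightarrow> liftR (SMM \<Phi>) t = S1 (liftR \<Phi>) t"
  by (cases t) (simp add: liftL_def liftR_def star_simp sum_CC cv.dg_def algebra_simps good_zero_last)

lemma IR: "good (\<Phi> :: ('f \<times> int) \<times> ('a \<times> int) list \<times> ('c + 'd) \<Rightarrow> 'g::ab_group_add) \<Longrightarrow> liftR ((SMM ^^ n) \<Phi>) = (S1 ^^ n) (liftR \<Phi>)"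
proof (induction n)
  case 0 then show ?case by simp
next
  case (Suc n)
  have g: "good ((SMM ^^ n) \<Phi>)" by (rule good_pow[OF Suc.prems])
  show ?case by (rule ext) (simp add: BR[OF g] Suc.IH[OF Suc.prems])
qed

lemma IL: "good (\<Phi> :: ('f \<times> int) \<times> ('a \<times> int) list \<times> ('c + 'd) \<Rightarrow> 'g::ab_group_add) \<Longrightarrow>
  liftL ((SMM ^^ n) \<Phi>) = (\<lambda>t. (S0 ^^ n) (liftL \<Phi>) t + (\<Sum>u<n. (S0 ^^ u) (Sh ((S1 ^^ (n - 1 - u)) (liftR \<Phi>))) t))"
proof (induction n)
  case 0 then show ?case by simp
next
  case (Suc n)
  have g: "good ((SMM ^^ n) \<Phi>)" by (rule good_pow[OF Suc.prems])
  show ?case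
  proof (rule ext)
    fix t
    have "liftL ((SMM ^^ Suc n) \<Phi>) t = S0 (liftL ((SMM ^^ n) \<Phi>)) t + Sh (liftR ((SMM ^^ n) \<Phi>)) t"
      by (simp add: BL)
    also have "\<dots> = S0 (\<lambda>t. (S0 ^^ n) (liftL \<Phi>) t + (\<Sum>u<n. (S0 ^^ u) (Sh ((S1 ^^ (n - 1 - u)) (liftR \<Phi>))) t)) t
        + Sh ((S1 ^^ n) (liftR \<Phi>)) t"
      by (simp only: Suc.IH[OF Suc.prems] IR[OF Suc.prems])
    also have "\<dots> = (S0 ^^ Suc n) (liftL \<Phi>) t + (\<Sum>u<n. (S0 ^^ Suc u) (Sh ((S1 ^^ (n - 1 - u)) (liftR \<Phi>))) t)
        + Sh ((S1 ^^ n) (liftR \<Phi>)) t"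
      by (simp add: star_add star_sum)
    also have "\<dots> = (S0 ^^ Suc n) (liftL \<Phi>) t + (\<Sum>u<Suc n. (S0 ^^ u) (Sh ((S1 ^^ (Suc n - 1 - u)) (liftR \<Phi>))) t)"
      by (simp only: sum.lessThan_Suc_shift) (simp add: algebra_simps del: sum.lessThan_Suc)
    finally show "liftL ((SMM ^^ Suc n) \<Phi>) t = (S0 ^^ Suc n) (liftL \<Phi>) t + (\<Sum>u<Suc n. (S0 ^^ u) (Sh ((S1 ^^ (Suc n - 1 - u)) (liftR \<Phi>))) t)" .
  qed
qed

lemma lift_NuF:
  "liftL (NuF nu (Inl x')) = NuF nu x'" "liftR (NuF nu (Inl x')) = (\<lambda>t. 0)"
  "liftL (NuF nu (Inr y)) = (\<lambda>t. 0)" "liftR (NuF nu (Inr y)) = NuF nu y"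
  by (auto simp: liftL_def liftR_def NuF_def split: prod.splits)

end


context comb
begin

lemma V_S1: "Van gA C1 (\<lambda>z. int (ind1 z) + 0 - int k) ((S1 ^^ k) (NuF nu y))"
  by (rule van_pow[where ii = "\<lambda>z. int (ind1 z)"]) (auto intro: m1_deg cv.van_NuF)

lemma V_S0: "Van gA C0 (\<lambda>z. int (ind0 z) + \<beta>) \<Phi> \<Longrightarrow> Van gA C0 (\<lambda>z. int (ind0 z) + \<beta> - int k) ((S0 ^^ k) \<Phi>)"
  by (rule van_pow[where ii = "\<lambda>z. int (ind0 z)"]) (auto intro: m0_deg)

lemma V_Sh: "Van gA C1 (\<lambda>z. int (ind1 z) + 0 - int k) \<Psi> \<Longrightarrow> Van gA C0 (\<lambda>z. int (ind0 z) + (1 - int k)) (Sh \<Psi>)"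
  by (rule van_star) (auto intro: h_deg)

lemma V_St: "tau_family gA dA mul C0 ind0 m0 C1 ind1 m1 t \<Longrightarrow>
   Van gA C1 (\<lambda>z. int (ind1 z) + 0 - int k) \<Psi> \<Longrightarrow> Van gA C0 (\<lambda>z. int (ind0 z) + (0 - int k)) (St t \<Psi>)"
  by (rule van_star) (auto intro: tau_deg)

lemma van_D0: "x \<in> C0 \<Longrightarrow> KK < n \<Longrightarrow> (S0 ^^ n) (NuF nu x') ((a, p), [], x) = 0"
proof -
  assume x: "x \<in> C0" and n: "KK < n"
  have v0: "Van gA C0 (\<lambda>z. int (ind0 z) + 0) (NuF nu x')" by (rule cv.van_NuF) simp
  have "Van gA C0 (\<lambda>z. int (ind0 z) + 0 - int n) ((S0 ^^ n) (NuF nu x'))" by (rule V_S0[OF v0])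
  then show ?thesis by (rule van_use) (use x n ind0_Kn[OF x] in auto)
qed

lemma van_D1: "w \<in> C1 \<Longrightarrow> KK < n \<Longrightarrow> (S1 ^^ n) (NuF nu y) ((a, p), [], w) = 0"
  by (rule van_use[OF V_S1]) (use ind1_Kn[of w] in auto)

lemma van_H: "x \<in> C0 \<Longrightarrow> u < n \<Longrightarrow> KK < n \<Longrightarrow> (S0 ^^ u) (Sh ((S1 ^^ (n - 1 - u)) (NuF nu y))) ((a, p), [], x) = 0"
proof -
  assume x: "x \<in> C0" and u: "u < n" and n: "KK < n"
  have "Van gA C0 (\<lambda>z. int (ind0 z) + (1 - int (n - 1 - u)) - int u) ((S0 ^^ u) (Sh ((S1 ^^ (n - 1 - u)) (NuF nu y))))"
    by (rule V_S0[OF V_Sh[OF V_S1]])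
  then show ?thesis by (rule van_use) (use x u n ind0_Kn[OF x] in auto)
qed

lemma van_Q: "tau_family gA dA mul C0 ind0 m0 C1 ind1 m1 t \<Longrightarrow> x \<in> C0 \<Longrightarrow> KK < i + j + 1 \<Longrightarrow>
   (S0 ^^ i) (St t ((S1 ^^ j) (NuF nu y))) ((a, p), [], x) = 0"
proof -
  assume t: "tau_family gA dA mul C0 ind0 m0 C1 ind1 m1 t" and x: "x \<in> C0" and n: "KK < i + j + 1"
  have "Van gA C0 (\<lambda>z. int (ind0 z) + (0 - int j) - int i) ((S0 ^^ i) (St t ((S1 ^^ j) (NuF nu y))))"
    by (rule V_S0[OF V_St[OF t V_S1]])
  then show ?thesis by (rule van_use) (use x n ind0_Kn[OF x] in auto)
qed

lemma SMM_L: "(SMM ^^ n) \<Phi> ((a, p), [], Inl x) = liftL ((SMM ^^ n) \<Phi>) ((a, p), [], x)"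
  by (simp add: liftL_def)
lemma SMM_R: "(SMM ^^ n) \<Phi> ((a, p), [], Inr y) = liftR ((SMM ^^ n) \<Phi>) ((a, p), [], y)"
  by (simp add: liftR_def)

lemma Sh_zero_pow: "Sh ((S1 ^^ k) (\<lambda>t. 0)) = (\<lambda>t. 0)"
  by (simp add: pow_zero star_zero_fun)

lemma G_LL: "x \<in> C0 \<Longrightarrow> cv.G a p (Inl x) (Inl x') = D0G a p x x'"
proof -
  assume x: "x \<in> C0"
  have "cv.G a p (Inl x) (Inl x') = (\<Sum>n\<le>KK. (S0 ^^ n) (NuF nu x') ((a, p), [], x))"
    unfolding cv.G_def SMM_L IL[OF cv.good_NuF] lift_NuF pow_zero star_zero_fun by simp
  also have "\<dots> = D0G a p x x'" unfolding D0G_def by (rule fsum_eq[symmetric]) (rule van_D0[OF x])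
  finally show ?thesis .
qed

lemma G_RR: "cv.G b q (Inr w) (Inr y) = (\<Sum>n\<le>KK. (S1 ^^ n) (NuF nu y) ((b, q), [], w))"
  unfolding cv.G_def SMM_R IR[OF cv.good_NuF] lift_NuF ..

lemma G_RR': "w \<in> C1 \<Longrightarrow> cv.G b q (Inr w) (Inr y) = D1G b q w y"
  unfolding G_RR D1G_def by (rule fsum_eq[symmetric]) (rule van_D1)

lemma G_LR: "x \<in> C0 \<Longrightarrow> cv.G a p (Inl x) (Inr y) = HG a p x y"
proof -
  assume x: "x \<in> C0"
  have "cv.G a p (Inl x) (Inr y) = (\<Sum>n\<le>KK. \<Sum>u<n. (S0 ^^ u) (Sh ((S1 ^^ (n - 1 - u)) (NuF nu y))) ((a, p), [], x))"
    unfolding cv.G_def SMM_L IL[OF cv.good_NuF] lift_NuF pow_zero by simp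
  also have "\<dots> = (\<Sum>n\<le>KK. \<Sum>u\<in>{1..n}. (S0 ^^ (u - 1)) (Sh ((S1 ^^ (n - u)) (NuF nu y))) ((a, p), [], x))"
  proof (rule sum.cong[OF refl])
    fix n
    show "(\<Sum>u<n. (S0 ^^ u) (Sh ((S1 ^^ (n - 1 - u)) (NuF nu y))) ((a, p), [], x)) =
          (\<Sum>u\<in>{1..n}. (S0 ^^ (u - 1)) (Sh ((S1 ^^ (n - u)) (NuF nu y))) ((a, p), [], x))"
      by (rule sum.reindex_bij_witness[where i = "\<lambda>u. u - 1" and j = "\<lambda>u. u + 1"]) auto
  qed
  also have "\<dots> = HG a p x y" unfolding HG_def
  proof (rule fsum_eq[symmetric])
    fix n assume n: "KK < n"
    show "(\<Sum>u\<in>{1..n}. (S0 ^^ (u - 1)) (Sh ((S1 ^^ (n - u)) (NuF nu y))) ((a, p), [], x)) = 0"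
    proof (rule sum.neutral, rule ballI)
      fix u assume "u \<in> {1..n}"
      then have u: "u - 1 < n" "n - u = n - 1 - (u - 1)" by auto
      show "(S0 ^^ (u - 1)) (Sh ((S1 ^^ (n - u)) (NuF nu y))) ((a, p), [], x) = 0"
        unfolding u(2) by (rule van_H[OF x u(1) n])
    qed
  qed
  finally show ?thesis .
qed

end


context comb
begin

lemma Del_LL: "x \<in> C0 \<Longrightarrow> x' \<in> C0 \<Longrightarrow> cv.Del (Inl x) (Inl x') = 0"
  using m0c by (simp add: cv.Del_def sum_CC cv.mul_0R twisting_cocycle_def)

lemma Del_LR: "x \<in> C0 \<Longrightarrow> y \<in> C1 \<Longrightarrow> cv.Del (Inl x) (Inr y) = tau x y - tau' x y"
proof -
  assume x: "x \<in> C0" and y: "y \<in> C1"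
  have s: "sgnz (int (ind0 x) + 2 - int (ind1 w)) v = sgnz (int (ind0 x) - int (ind1 w)) v" for w and v :: 'a
    by (rule sgnz_eq2[where t = 1]) simp
  have s0: "sgnz (int (ind0 x) + 2 - (int (ind0 z) + 2)) v = sgnz (int (ind0 x) - int (ind0 z)) v" for z and v :: 'a
    by simp
  have dh: "dA (h x y) = tau x y - tau' x y
        + (\<Sum>z\<in>C0. sgnz (int (ind0 x) - int (ind0 z)) (mul (m0 x z) (h z y)))
        + (\<Sum>w\<in>C1. sgnz (int (ind0 x) - int (ind1 w)) (mul (h x w) (m1 w y)))"
    using hf x y by (simp add: homotopy_family_def)
  show ?thesis unfolding cv.Del_def sum_CC MM_simps iiC_simps s s0 dh by simp
qed

lemma Del_R: "y \<in> C1 \<Longrightarrow> c' \<in> CC \<Longrightarrow> cv.Del (Inr y) c' = 0"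
proof -
  assume y: "y \<in> C1" and c': "c' \<in> CC"
  show ?thesis
  proof (cases c')
    case (Inl x)
    then show ?thesis by (simp add: cv.Del_def sum_CC cv.mul_0L cv.mul_0R cv.dA_0)
  next
    case (Inr y')
    then have y': "y' \<in> C1" using c' by (auto simp: CC_def)
    show ?thesis using m1c y y' Inr by (simp add: cv.Del_def sum_CC cv.mul_0L twisting_cocycle_def)
  qed
qed

lemma SD_L:
  assumes g: "good (\<Psi> :: ('f \<times> int) \<times> ('a \<times> int) list \<times> ('c + 'd) \<Rightarrow> 'g::ab_group_add)" and x: "x \<in> C0"
  shows "liftL (SDc \<Psi>) (ap, gs, x) = St tau (liftR \<Psi>) (ap, gs, x) - St tau' (liftR \<Psi>) (ap, gs, x)"
proof -
  have 1: "(\<Sum>x'\<in>C0. \<Psi> (ap, gs @ [(cv.Del (Inl x) (Inl x'), cv.dg (Inl x) (Inl x') - 1)], Inl x')) = 0"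
    by (rule sum.neutral) (simp add: Del_LL[OF x] good_zero_last[OF g])
  have dgeq: "cv.dg (Inl x) (Inr y) - 1 = int (ind0 x) - int (ind1 y)" for y by (simp add: cv.dg_def)
  have 2: "(\<Sum>y\<in>C1. \<Psi> (ap, gs @ [(cv.Del (Inl x) (Inr y), cv.dg (Inl x) (Inr y) - 1)], Inr y)) =
     (\<Sum>y\<in>C1. \<Psi> (ap, gs @ [(tau x y, int (ind0 x) - int (ind1 y))], Inr y) - \<Psi> (ap, gs @ [(tau' x y, int (ind0 x) - int (ind1 y))], Inr y))"
    by (rule sum.cong[OF refl]) (simp add: Del_LR[OF x] dgeq good_diff_last[OF g])
  have "liftL (SDc \<Psi>) (ap, gs, x) = (\<Sum>x'\<in>C0. \<Psi> (ap, gs @ [(cv.Del (Inl x) (Inl x'), cv.dg (Inl x) (Inl x') - 1)], Inl x'))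
     + (\<Sum>y\<in>C1. \<Psi> (ap, gs @ [(cv.Del (Inl x) (Inr y), cv.dg (Inl x) (Inr y) - 1)], Inr y))"
    by (simp add: liftL_def star_simp sum_CC)
  also have "\<dots> = St tau (liftR \<Psi>) (ap, gs, x) - St tau' (liftR \<Psi>) (ap, gs, x)"
    unfolding 1 2 by (simp add: star_simp liftR_def sum_subtractf)
  finally show ?thesis .
qed

lemma SD_R:
  assumes g: "good (\<Psi> :: ('f \<times> int) \<times> ('a \<times> int) list \<times> ('c + 'd) \<Rightarrow> 'g::ab_group_add)" and y: "y \<in> C1"
  shows "liftR (SDc \<Psi>) (ap, gs, y) = 0"
  unfolding liftR_def star_simp prod.case
  by (rule sum.neutral) (simp add: Del_R[OF y] good_zero_last[OF g])

definition "Q t a p x y i j = (S0 ^^ i) (St t ((S1 ^^ j) (NuF nu y))) ((a, p), [], x)"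

lemma RHS_tr:
  assumes x: "x \<in> C0" and y: "y \<in> C1"
  shows "(SMM ^^ i) (SDc ((SMM ^^ j) (NuF nu (Inr y)))) ((a, p), [], Inl x) = Q tau a p x y i j - Q tau' a p x y i j"
proof -
  let ?\<Psi> = "(SMM ^^ j) (NuF nu (Inr y))"
  have g\<Psi>: "good ?\<Psi>" by (rule good_pow[OF cv.good_NuF])
  have g\<Xi>: "good (SDc ?\<Psi>)" by (rule good_star[OF g\<Psi>])
  have lR: "liftR ?\<Psi> = (S1 ^^ j) (NuF nu y)" unfolding IR[OF cv.good_NuF] lift_NuF ..
  have zero: "Sh ((S1 ^^ k) (liftR (SDc ?\<Psi>))) = (\<lambda>t. 0)" for k
  proof -
    have "Sh ((S1 ^^ k) (liftR (SDc ?\<Psi>))) = Sh ((S1 ^^ k) (\<lambda>t. 0))"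
      by (rule star_cong_D, rule pow_cong_D) (auto simp: SD_R[OF g\<Psi>])
    then show ?thesis by (simp add: Sh_zero_pow)
  qed
  have main: "(S0 ^^ i) (liftL (SDc ?\<Psi>)) ((a, p), [], x) =
     (S0 ^^ i) (\<lambda>t. St tau (liftR ?\<Psi>) t - St tau' (liftR ?\<Psi>) t) ((a, p), [], x)"
    by (rule pow_cong_D) (auto simp: SD_L[OF g\<Psi>] x)
  have "(SMM ^^ i) (SDc ?\<Psi>) ((a, p), [], Inl x) = (S0 ^^ i) (liftL (SDc ?\<Psi>)) ((a, p), [], x)"
    unfolding SMM_L IL[OF g\<Xi>] zero pow_zero by simp
  also have "\<dots> = Q tau a p x y i j - Q tau' a p x y i j"
    unfolding main pow_diff lR Q_def ..
  finally show ?thesis .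
qed

lemma PsiG_eq:
  assumes t: "tau_family gA dA mul C0 ind0 m0 C1 ind1 m1 t" and x: "x \<in> C0"
  shows "PsiG t a p x y = (\<Sum>i\<le>KK. \<Sum>j\<le>KK. sgnz (int i) (Q t a p x y i j))"
proof -
  have "PsiG t a p x y = fsum (\<lambda>n. \<Sum>u\<in>{1..n}. sgnz (int (u - 1)) (Q t a p x y (u - 1) (n - u)))"
    unfolding PsiG_def Q_def
    by (rule arg_cong[where f = fsum], rule ext, rule sum.cong[OF refl]) (simp add: of_nat_diff)
  also have "\<dots> = (\<Sum>n\<le>KK. \<Sum>u\<in>{1..n}. sgnz (int (u - 1)) (Q t a p x y (u - 1) (n - u)))"
  proof (rule fsum_eq)
    fix n assume n: "KK < n"
    show "(\<Sum>u\<in>{1..n}. sgnz (int (u - 1)) (Q t a p x y (u - 1) (n - u))) = 0"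
      by (rule sum.neutral) (use n in \<open>auto simp: Q_def van_Q[OF t x]\<close>)
  qed
  also have "\<dots> = (\<Sum>i\<le>KK. \<Sum>j\<le>KK. sgnz (int i) (Q t a p x y i j))"
    by (rule psi_reindex) (simp add: Q_def van_Q[OF t x])
  finally show ?thesis .
qed

end


context comb
begin

lemma curv_x:
  assumes a: "a \<in> gF p" and x: "x \<in> C0" and y: "y \<in> C1"
  shows "(\<Sum>x'\<in>C0. HG (D0G a p x x') (p + int (ind0 x) - int (ind0 x') - 1) x' y)
       + (\<Sum>w\<in>C1. D1G (HG a p x w) (p + int (ind0 x) + 1 - int (ind1 w)) w y)
       = PsiG tau a p x y - PsiG tau' a p x y"
proof -
  have xC: "Inl x \<in> CC" and yC: "Inr y \<in> CC" using x y by (auto simp: CC_def)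
  have cm: "(\<Sum>c'\<in>CC. cv.G (cv.G a p (Inl x) c') (p + iiC (Inl x) - iiC c' - 1) c' (Inr y))
     = (\<Sum>i\<le>KK. \<Sum>j\<le>KK. sgnz (int i) ((SMM ^^ i) (SDc ((SMM ^^ j) (NuF nu (Inr y)))) ((a, p), [], Inl x)))"
    by (rule cv.curv_main[OF a xC yC])
  have L: "(\<Sum>c'\<in>CC. cv.G (cv.G a p (Inl x) c') (p + iiC (Inl x) - iiC c' - 1) c' (Inr y))
     = (\<Sum>x'\<in>C0. HG (D0G a p x x') (p + int (ind0 x) - int (ind0 x') - 1) x' y)
       + (\<Sum>w\<in>C1. D1G (HG a p x w) (p + int (ind0 x) + 1 - int (ind1 w)) w y)"
  proof -
    have 1: "(\<Sum>x'\<in>C0. cv.G (cv.G a p (Inl x) (Inl x')) (p + iiC (Inl x) - iiC (Inl x') - 1) (Inl x') (Inr y))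
       = (\<Sum>x'\<in>C0. HG (D0G a p x x') (p + int (ind0 x) - int (ind0 x') - 1) x' y)"
    proof (rule sum.cong[OF refl])
      fix x' assume x': "x' \<in> C0"
      have e: "p + iiC (Inl x) - iiC (Inl x') - 1 = p + int (ind0 x) - int (ind0 x') - 1" by simp
      show "cv.G (cv.G a p (Inl x) (Inl x')) (p + iiC (Inl x) - iiC (Inl x') - 1) (Inl x') (Inr y)
         = HG (D0G a p x x') (p + int (ind0 x) - int (ind0 x') - 1) x' y"
        unfolding e G_LL[OF x] G_LR[OF x'] ..
    qed
    have 2: "(\<Sum>w\<in>C1. cv.G (cv.G a p (Inl x) (Inr w)) (p + iiC (Inl x) - iiC (Inr w) - 1) (Inr w) (Inr y))
       = (\<Sum>w\<in>C1. D1G (HG a p x w) (p + int (ind0 x) + 1 - int (ind1 w)) w y)"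
    proof (rule sum.cong[OF refl])
      fix w assume w: "w \<in> C1"
      have e: "p + iiC (Inl x) - iiC (Inr w) - 1 = p + int (ind0 x) + 1 - int (ind1 w)" by simp
      show "cv.G (cv.G a p (Inl x) (Inr w)) (p + iiC (Inl x) - iiC (Inr w) - 1) (Inr w) (Inr y)
         = D1G (HG a p x w) (p + int (ind0 x) + 1 - int (ind1 w)) w y"
        unfolding e G_LR[OF x] G_RR'[OF w] ..
    qed
    show ?thesis unfolding sum_CC 1 2 ..
  qed
  have R: "(\<Sum>i\<le>KK. \<Sum>j\<le>KK. sgnz (int i) ((SMM ^^ i) (SDc ((SMM ^^ j) (NuF nu (Inr y)))) ((a, p), [], Inl x)))
     = PsiG tau a p x y - PsiG tau' a p x y"
    unfolding RHS_tr[OF x y] PsiG_eq[OF tauf x] PsiG_eq[OF tauf' x]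
    by (simp add: sgnz_diff_arg sum_subtractf)
  show ?thesis using cm unfolding L R .
qed

theorem main:
  "chain_homotopy gF C0 ind0 C1 ind1
     (twisted_diff nu C0 ind0 m0) (twisted_diff nu C1 ind1 m1)
     (Psi_map nu C0 ind0 m0 C1 ind1 m1 tau) (Psi_map nu C0 ind0 m0 C1 ind1 m1 tau')
     (H_map nu C0 ind0 m0 C1 ind1 m1 h)"
  unfolding chain_homotopy_def
proof (intro allI impI conjI ballI)
  fix N phi
  assume ce: "chain_el gF C0 ind0 N phi"
  then have ph: "\<And>x. x \<in> C0 \<Longrightarrow> phi x \<in> gF (N - int (ind0 x))" by (simp add: chain_el_def)
  have Hx: "H_map nu C0 ind0 m0 C1 ind1 m1 h N phi w = (\<Sum>x\<in>C0. cv.G (phi x) (N - int (ind0 x)) (Inl x) (Inr w))" for w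
    unfolding B_H by (rule sum.cong[OF refl]) (simp add: G_LR)
  show "chain_el gF C1 ind1 (N + 1) (H_map nu C0 ind0 m0 C1 ind1 m1 h N phi)"
    unfolding chain_el_def
  proof
    fix y assume y: "y \<in> C1"
    show "H_map nu C0 ind0 m0 C1 ind1 m1 h N phi y \<in> gF (N + 1 - int (ind1 y))"
      unfolding Hx
    proof (rule cv.gF_sum)
      fix x assume x: "x \<in> C0"
      have "cv.G (phi x) (N - int (ind0 x)) (Inl x) (Inr y) \<in> gF (N - int (ind0 x) + iiC (Inl x) - iiC (Inr y) - 1)"
        by (rule cv.G_deg[OF ph[OF x]]) (use x y in \<open>auto simp: CC_def\<close>)
      moreover have "N - int (ind0 x) + iiC (Inl x) - iiC (Inr y) - 1 = N + 1 - int (ind1 y)" by simp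
      ultimately show "cv.G (phi x) (N - int (ind0 x)) (Inl x) (Inr y) \<in> gF (N + 1 - int (ind1 y))" by (simp only:)
    qed
  qed
  fix y assume y: "y \<in> C1"
  let ?p = "\<lambda>x. N - int (ind0 x)"
  have d1H: "twisted_diff nu C1 ind1 m1 (N + 1) (H_map nu C0 ind0 m0 C1 ind1 m1 h N phi) y
     = (\<Sum>x\<in>C0. \<Sum>w\<in>C1. D1G (HG (phi x) (?p x) x w) (?p x + int (ind0 x) + 1 - int (ind1 w)) w y)"
  proof -
    have "twisted_diff nu C1 ind1 m1 (N + 1) (H_map nu C0 ind0 m0 C1 ind1 m1 h N phi) y
       = (\<Sum>w\<in>C1. cv.G (\<Sum>x\<in>C0. cv.G (phi x) (?p x) (Inl x) (Inr w)) (N + 1 - int (ind1 w)) (Inr w) (Inr y))"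
      unfolding B_td1 Hx by (rule sum.cong[OF refl]) (simp add: G_RR')
    also have "\<dots> = (\<Sum>w\<in>C1. \<Sum>x\<in>C0. D1G (HG (phi x) (?p x) x w) (?p x + int (ind0 x) + 1 - int (ind1 w)) w y)"
      unfolding cv.G_sum by (intro sum.cong refl) (simp add: G_RR' G_LR)
    also have "\<dots> = (\<Sum>x\<in>C0. \<Sum>w\<in>C1. D1G (HG (phi x) (?p x) x w) (?p x + int (ind0 x) + 1 - int (ind1 w)) w y)"
      by (rule sum.swap)
    finally show ?thesis .
  qed
  have Hd0: "H_map nu C0 ind0 m0 C1 ind1 m1 h (N - 1) (twisted_diff nu C0 ind0 m0 N phi) y
     = (\<Sum>x\<in>C0. \<Sum>x'\<in>C0. HG (D0G (phi x) (?p x) x x') (?p x + int (ind0 x) - int (ind0 x') - 1) x' y)"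
  proof -
    have "H_map nu C0 ind0 m0 C1 ind1 m1 h (N - 1) (twisted_diff nu C0 ind0 m0 N phi) y
       = (\<Sum>x'\<in>C0. cv.G (\<Sum>x\<in>C0. cv.G (phi x) (?p x) (Inl x) (Inl x')) (N - 1 - int (ind0 x')) (Inl x') (Inr y))"
      unfolding B_H B_td0 by (rule sum.cong[OF refl]) (simp add: G_LR G_LL)
    also have "\<dots> = (\<Sum>x'\<in>C0. \<Sum>x\<in>C0. HG (D0G (phi x) (?p x) x x') (?p x + int (ind0 x) - int (ind0 x') - 1) x' y)"
      unfolding cv.G_sum by (intro sum.cong refl) (simp add: G_LR G_LL algebra_simps)
    also have "\<dots> = (\<Sum>x\<in>C0. \<Sum>x'\<in>C0. HG (D0G (phi x) (?p x) x x') (?p x + int (ind0 x) - int (ind0 x') - 1) x' y)"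
      by (rule sum.swap)
    finally show ?thesis .
  qed
  show "Psi_map nu C0 ind0 m0 C1 ind1 m1 tau N phi y - Psi_map nu C0 ind0 m0 C1 ind1 m1 tau' N phi y =
        twisted_diff nu C1 ind1 m1 (N + 1) (H_map nu C0 ind0 m0 C1 ind1 m1 h N phi) y +
        H_map nu C0 ind0 m0 C1 ind1 m1 h (N - 1) (twisted_diff nu C0 ind0 m0 N phi) y"
    unfolding d1H Hd0 B_psi sum_subtractf[symmetric] sum.distrib[symmetric]
  proof (rule sum.cong[OF refl])
    fix x assume x: "x \<in> C0"
    show "PsiG tau (phi x) (?p x) x y - PsiG tau' (phi x) (?p x) x y =
      (\<Sum>w\<in>C1. D1G (HG (phi x) (?p x) x w) (?p x + int (ind0 x) + 1 - int (ind1 w)) w y) +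
      (\<Sum>x'\<in>C0. HG (D0G (phi x) (?p x) x x') (?p x + int (ind0 x) - int (ind0 x') - 1) x' y)"
      using curv_x[OF ph[OF x] x y] by (simp add: add.commute)
  qed
qed

end


theorem proposition4p11:
  fixes gA :: "int \<Rightarrow> 'a::ab_group_add set" and dA :: "'a \<Rightarrow> 'a" and mul :: "'a \<Rightarrow> 'a \<Rightarrow> 'a"
    and gF :: "int \<Rightarrow> 'f::ab_group_add set" and nu :: "nat \<Rightarrow> 'f \<Rightarrow> 'a list \<Rightarrow> 'f"
    and C0 :: "'c::linorder set" and ind0 :: "'c \<Rightarrow> nat" and m0 :: "'c \<Rightarrow> 'c \<Rightarrow> 'a"
    and C1 :: "'d::linorder set" and ind1 :: "'d \<Rightarrow> nat" and m1 :: "'d \<Rightarrow> 'd \<Rightarrow> 'a"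
    and tau tau' h :: "'c \<Rightarrow> 'd \<Rightarrow> 'a"
  assumes alg: "ainf_alg gA dA mul"
    and nonneg: "\<And>q. q < 0 \<Longrightarrow> gA q = {0}"
    and module: "ainf_module gA dA mul gF nu"
    and fin0: "finite C0" and fin1: "finite C1"
    and m0: "twisting_cocycle gA dA mul C0 ind0 m0"
    and m1: "twisting_cocycle gA dA mul C1 ind1 m1"
    and tau: "tau_family gA dA mul C0 ind0 m0 C1 ind1 m1 tau"
    and tau': "tau_family gA dA mul C0 ind0 m0 C1 ind1 m1 tau'"
    and h: "homotopy_family gA dA mul C0 ind0 m0 C1 ind1 m1 tau tau' h"
  shows "chain_homotopy gF C0 ind0 C1 ind1
           (twisted_diff nu C0 ind0 m0) (twisted_diff nu C1 ind1 m1)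
           (Psi_map nu C0 ind0 m0 C1 ind1 m1 tau) (Psi_map nu C0 ind0 m0 C1 ind1 m1 tau')
           (H_map nu C0 ind0 m0 C1 ind1 m1 h)"
  using comb.main[OF comb.intro[OF alg nonneg module fin0 fin1 m0 m1 tau tau' h]] .

end
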